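(* Let $n\geq 4$ and let $A$ and $B$ be two $n\times n$ generalized tournament matrices. Suppose that $A$ is indecomposable. If $A$ and $B$ have equal corresponding principal minors of all orders, then $A=B$ or $A=B^{t}$.
   Context: A generalized tournament matrix of order $n$ is a real $n\times n$ matrix $M=(m_{ij})$ with nonnegative entries satisfying $M+M^{t}=J_n-I_n$ ($J_n$ the all-ones matrix, $I_n$ the identity). Write $[n]=\{1,\ldots,n\}$. A clan of $M$ is a subset $X\subseteq[n]$ such that for all $i,j\in X$ and $k\in[n]\setminus X$, $m_{ik}=m_{jk}$ and $m_{ki}=m_{kj}$. The empty set, singletons and $[n]$ are the trivial clans; $M$ is indecomposable if all its clans are trivial. *)

theory Defs
  imports "HOL-Analysis.Analysis"
begin

text \<open>Matrices of order n are represented as functions nat \<Rightarrow> nat \<Rightarrow> real,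
  with indices in {0..<n} (playing the role of [n]).\<close>

definition gen_tournament :: "nat \<Rightarrow> (nat \<Rightarrow> nat \<Rightarrow> real) \<Rightarrow> bool" where
  "gen_tournament n M \<longleftrightarrow>
     (\<forall>i<n. \<forall>j<n. M i j \<ge> 0) \<and>
     (\<forall>i<n. \<forall>j<n. M i j + M j i = (if i = j then 0 else 1))"

definition is_clan :: "nat \<Rightarrow> (nat \<Rightarrow> nat \<Rightarrow> real) \<Rightarrow> nat set \<Rightarrow> bool" where
  "is_clan n M X \<longleftrightarrow> X \<subseteq> {0..<n} \<and>
     (\<forall>i\<in>X. \<forall>j\<in>X. \<forall>k\<in>{0..<n} - X. M i k = M j k \<and> M k i = M k j)"

definition indecomposable :: "nat \<Rightarrow> (nat \<Rightarrow> nat \<Rightarrow> real) \<Rightarrow> bool" where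
  "indecomposable n M \<longleftrightarrow>
     (\<forall>X. is_clan n M X \<longrightarrow> card X \<le> 1 \<or> X = {0..<n})"

definition principal_minor :: "(nat \<Rightarrow> nat \<Rightarrow> real) \<Rightarrow> nat set \<Rightarrow> real" where
  "principal_minor M S = (\<Sum>p | p permutes S. of_int (sign p) * (\<Prod>i\<in>S. M i (p i)))"

end

theory Submission
  imports Defs
begin

lemma pm_empty: "principal_minor M {} = 1"
  by (simp add: principal_minor_def)

lemma pm_insert:
  assumes fS: "finite S" and aS: "a \<notin> S"
  shows "principal_minor M (insert a S) =
    (\<Sum>b\<in>insert a S. (if b = a then 1 else -1) * M a b *
        principal_minor (\<lambda>i j. if j = b then M i a else M i j) S)"
proof -
  have "principal_minor M (insert a S) =
    (\<Sum>b\<in>insert a S. \<Sum>q\<in>{p. p permutes S}. of_int (sign (Transposition.transpose a b \<circ> q)) *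
        (\<Prod>i\<in>insert a S. M i ((Transposition.transpose a b \<circ> q) i)))"
    unfolding principal_minor_def by (rule sum_over_permutations_insert[OF fS aS])
  also have "\<dots> = (\<Sum>b\<in>insert a S. \<Sum>q\<in>{p. p permutes S}.
      (if b = a then 1 else -1) * M a b * (of_int (sign q) *
        (\<Prod>i\<in>S. (\<lambda>i j. if j = b then M i a else M i j) i (q i))))"
  proof (rule sum.cong[OF refl], rule sum.cong[OF refl])
    fix b q assume b: "b \<in> insert a S" and q: "q \<in> {p. p permutes S}"
    then have qS: "q permutes S" by simp
    have qa: "q a = a" using qS aS by (simp add: permutes_not_in)
    have perm_q: "permutation q" using qS fS permutation_permutes by blast
    have sg: "sign (Transposition.transpose a b \<circ> q) = (if b = a then 1 else -1) * sign q"
      by (simp add: sign_compose[OF permutation_swap_id perm_q] sign_swap_id eq_commute)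
    have qi: "\<And>i. i \<in> S \<Longrightarrow> q i \<in> S" using qS by (simp add: permutes_in_image)
    have pr: "(\<Prod>i\<in>insert a S. M i ((Transposition.transpose a b \<circ> q) i)) =
        M a b * (\<Prod>i\<in>S. (\<lambda>i j. if j = b then M i a else M i j) i (q i))"
    proof -
      have "(\<Prod>i\<in>insert a S. M i ((Transposition.transpose a b \<circ> q) i)) =
          M a ((Transposition.transpose a b \<circ> q) a) * (\<Prod>i\<in>S. M i ((Transposition.transpose a b \<circ> q) i))"
        using fS aS by simp
      also have "(\<Prod>i\<in>S. M i ((Transposition.transpose a b \<circ> q) i)) =
          (\<Prod>i\<in>S. (\<lambda>i j. if j = b then M i a else M i j) i (q i))"
      proof (rule prod.cong[OF refl])
        fix i assume "i \<in> S"
        then have "q i \<in> S" by (rule qi)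
        then have "q i \<noteq> a" using aS by auto
        then show "M i ((Transposition.transpose a b \<circ> q) i) = (\<lambda>i j. if j = b then M i a else M i j) i (q i)"
          by (auto simp: Transposition.transpose_def)
      qed
      finally show ?thesis using qa by (simp add: Transposition.transpose_def)
    qed
    show "of_int (sign (Transposition.transpose a b \<circ> q)) * (\<Prod>i\<in>insert a S. M i ((Transposition.transpose a b \<circ> q) i)) =
      (if b = a then 1 else -1) * M a b * (of_int (sign q) *
        (\<Prod>i\<in>S. (\<lambda>i j. if j = b then M i a else M i j) i (q i)))"
      unfolding sg pr by (simp add: algebra_simps)
  qed
  also have "\<dots> = (\<Sum>b\<in>insert a S. (if b = a then 1 else -1) * M a b *
        principal_minor (\<lambda>i j. if j = b then M i a else M i j) S)"
    unfolding principal_minor_def by (simp add: sum_distrib_left)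
  finally show ?thesis .
qed

lemma pm_single: "principal_minor M {a} = M a a"
  using pm_insert[of "{}" a M] by (simp add: pm_empty)

lemma pm2: "a \<noteq> b \<Longrightarrow> principal_minor M {a,b} = M a a * M b b - M a b * M b a"
  by (simp add: pm_insert pm_single)

lemma pm3: "distinct [a,b,c] \<Longrightarrow> principal_minor M {a,b,c} =
   M a a * (M b b * M c c - M b c * M c b) - M a b * (M b a * M c c - M b c * M c a)
   + M a c * (M b a * M c b - M b b * M c a)"
  by (simp add: pm_insert pm_single algebra_simps)


lemma pm4: "distinct [a,b,c,d] \<Longrightarrow> principal_minor M {a,b,c,d} =
  M a a * M b b * M c c * M d d - M a a * M b b * M c d * M d c - M a a * M b c * M c b * M d d + M a a * M b c * M c d * M d b + M a a * M b d * M c b * M d c - M a a * M b d * M c c * M d b - M a b * M b a * M c c * M d d + M a b * M b a * M c d * M d c + M a b * M b c * M c a * M d d - M a b * M b c * M c d * M d a - M a b * M b d * M c a * M d c + M a b * M b d * M c c * M d a + M a c * M b a * M c b * M d d - M a c * M b a * M c d * M d b - M a c * M b b * M c a * M d d + M a c * M b b * M c d * M d a + M a c * M b d * M c a * M d b - M a c * M b d * M c b * M d a - M a d * M b a * M c b * M d c + M a d * M b a * M c c * M d b + M a d * M b b * M c a * M d c - M a d * M b b * M c c * M d a - M a d * M b c * M c a * M d b + M a d * M b c * M c b * M d a"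
proof -
  assume d: "distinct [a,b,c,d]"
  then have "a \<noteq> b" "a \<noteq> c" "a \<noteq> d" "b \<noteq> c" "b \<noteq> d" "c \<noteq> d"
    "b \<noteq> a" "c \<noteq> a" "d \<noteq> a" "c \<noteq> b" "d \<noteq> b" "d \<noteq> c" by auto
  then show ?thesis
    by (simp add: pm_insert pm_single pm_empty algebra_simps)
qed


lemma card_le1I: "K \<subseteq> {x} \<Longrightarrow> card K \<le> 1"
  using card_mono[of "{x}" K] by simp

locale gt =
  fixes n :: nat and A :: "nat \<Rightarrow> nat \<Rightarrow> real"
  assumes gtA: "gen_tournament n A"
begin

lemma skew: "i < n \<Longrightarrow> j < n \<Longrightarrow> i \<noteq> j \<Longrightarrow> A j i = 1 - A i j"
  using gtA unfolding gen_tournament_def by (metis add.commute eq_diff_eq)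

lemma diag: "i < n \<Longrightarrow> A i i = 0"
proof -
  assume "i < n"
  then have "A i i + A i i = 0" using gtA unfolding gen_tournament_def by auto
  then show ?thesis by simp
qed

definition clanin :: "nat set \<Rightarrow> nat set \<Rightarrow> bool" where
  "clanin Y K \<longleftrightarrow> K \<subseteq> Y \<and> (\<forall>i\<in>K. \<forall>j\<in>K. \<forall>k\<in>Y - K. A k i = A k j)"

definition indec :: "nat set \<Rightarrow> bool" where
  "indec Y \<longleftrightarrow> (\<forall>K. clanin Y K \<longrightarrow> card K \<le> 1 \<or> K = Y)"

definition twin :: "nat set \<Rightarrow> nat \<Rightarrow> nat \<Rightarrow> bool" where
  "twin X s v \<longleftrightarrow> (\<forall>w\<in>X - {s}. A w s = A w v)"

definition ext :: "nat set \<Rightarrow> nat \<Rightarrow> bool" where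
  "ext X v \<longleftrightarrow> (\<forall>i\<in>X. \<forall>j\<in>X. A v i = A v j)"

lemma indecD: "indec Y \<Longrightarrow> clanin Y K \<Longrightarrow> 2 \<le> card K \<Longrightarrow> K = Y"
  unfolding indec_def by fastforce

lemma clanin_restrict: "clanin Y K \<Longrightarrow> Z \<subseteq> Y \<Longrightarrow> clanin Z (K \<inter> Z)"
  unfolding clanin_def by blast

lemma card_le1_eqI: "finite K \<Longrightarrow> (\<And>x y. x\<in>K \<Longrightarrow> y\<in>K \<Longrightarrow> x = y) \<Longrightarrow> card K \<le> 1"
  by (metis One_nat_def card_le_Suc0_iff_eq)

lemma indec3I:
  assumes "a \<noteq> b" "a \<noteq> c" "b \<noteq> c"
    and "A a b \<noteq> A a c" "A b a \<noteq> A b c" "A c a \<noteq> A c b"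
  shows "indec {a,b,c}"
  unfolding indec_def
proof (intro allI impI)
  fix K assume K: "clanin {a,b,c} K"
  then have sub: "K \<subseteq> {a,b,c}" by (simp add: clanin_def)
  have fin: "finite K" using sub finite_subset by blast
  have cl: "\<And>i j k. i\<in>K \<Longrightarrow> j\<in>K \<Longrightarrow> k \<in> {a,b,c} \<Longrightarrow> k \<notin> K \<Longrightarrow> A k i = A k j"
  proof -
    fix i j k assume "i\<in>K" "j\<in>K" "k \<in> {a,b,c}" "k \<notin> K"
    then have "k \<in> {a,b,c} - K" by blast
    then show "A k i = A k j" using K \<open>i\<in>K\<close> \<open>j\<in>K\<close> unfolding clanin_def by blast
  qed
  have c1: "a\<in>K \<Longrightarrow> b\<in>K \<Longrightarrow> c\<notin>K \<Longrightarrow> A c a = A c b" by (rule cl) auto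
  have c2: "a\<in>K \<Longrightarrow> c\<in>K \<Longrightarrow> b\<notin>K \<Longrightarrow> A b a = A b c" by (rule cl) auto
  have c3: "b\<in>K \<Longrightarrow> c\<in>K \<Longrightarrow> a\<notin>K \<Longrightarrow> A a b = A a c" by (rule cl) auto
  show "card K \<le> 1 \<or> K = {a,b,c}"
  proof -
    have m: "\<And>x. x \<in> K \<Longrightarrow> x = a \<or> x = b \<or> x = c" using sub by auto
    have full: "a\<in>K \<Longrightarrow> b\<in>K \<Longrightarrow> c\<in>K \<Longrightarrow> card K \<le> 1 \<or> K = {a,b,c}" using sub by auto
    have s1: "b\<notin>K \<Longrightarrow> c\<notin>K \<Longrightarrow> card K \<le> 1 \<or> K = {a,b,c}"
      by (rule disjI1, rule card_le1_eqI[OF fin]) (metis m)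
    have s2: "a\<notin>K \<Longrightarrow> c\<notin>K \<Longrightarrow> card K \<le> 1 \<or> K = {a,b,c}"
      by (rule disjI1, rule card_le1_eqI[OF fin]) (metis m)
    have s3: "a\<notin>K \<Longrightarrow> b\<notin>K \<Longrightarrow> card K \<le> 1 \<or> K = {a,b,c}"
      by (rule disjI1, rule card_le1_eqI[OF fin]) (metis m)
    show ?thesis
    proof (cases "a\<in>K")
      case True
      show ?thesis
      proof (cases "b\<in>K")
        case True
        show ?thesis
        proof (cases "c\<in>K")
          case True
          show ?thesis using full \<open>a\<in>K\<close> \<open>b\<in>K\<close> \<open>c\<in>K\<close> by blast
        next
          case False
          show ?thesis using assms(6) c1 \<open>a\<in>K\<close> \<open>b\<in>K\<close> \<open>c\<notin>K\<close> by auto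
        qed
      next
        case False
        show ?thesis
        proof (cases "c\<in>K")
          case True
          show ?thesis using assms(5) c2 \<open>a\<in>K\<close> \<open>b\<notin>K\<close> \<open>c\<in>K\<close> by auto
        next
          case False
          show ?thesis using s1 \<open>a\<in>K\<close> \<open>b\<notin>K\<close> \<open>c\<notin>K\<close> by blast
        qed
      qed
    next
      case False
      show ?thesis
      proof (cases "b\<in>K")
        case True
        show ?thesis
        proof (cases "c\<in>K")
          case True
          show ?thesis using assms(4) c3 \<open>a\<notin>K\<close> \<open>b\<in>K\<close> \<open>c\<in>K\<close> by auto
        next
          case False
          show ?thesis using s2 \<open>a\<notin>K\<close> \<open>b\<in>K\<close> \<open>c\<notin>K\<close> by blast
        qed
      next
        case False
        show ?thesis
        proof (cases "c\<in>K")
          case True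
          show ?thesis using s3 \<open>a\<notin>K\<close> \<open>b\<notin>K\<close> \<open>c\<in>K\<close> by blast
        next
          case False
          show ?thesis using s1 \<open>a\<notin>K\<close> \<open>b\<notin>K\<close> \<open>c\<notin>K\<close> by blast
        qed
      qed
    qed
  qed
qed

lemma indec4I:
  assumes "distinct [a,b,c,d]"
    and ab: "A c a \<noteq> A c b \<or> A d a \<noteq> A d b"
    and ac: "A b a \<noteq> A b c \<or> A d a \<noteq> A d c"
    and ad: "A b a \<noteq> A b d \<or> A c a \<noteq> A c d"
    and bc: "A a b \<noteq> A a c \<or> A d b \<noteq> A d c"
    and bd: "A a b \<noteq> A a d \<or> A c b \<noteq> A c d"
    and cd: "A a c \<noteq> A a d \<or> A b c \<noteq> A b d"
    and abc: "A d a \<noteq> A d b \<or> A d a \<noteq> A d c"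
    and abd: "A c a \<noteq> A c b \<or> A c a \<noteq> A c d"
    and acd: "A b a \<noteq> A b c \<or> A b a \<noteq> A b d"
    and bcd: "A a b \<noteq> A a c \<or> A a b \<noteq> A a d"
  shows "indec {a,b,c,d}"
  unfolding indec_def
proof (intro allI impI)
  fix K assume K: "clanin {a,b,c,d} K"
  then have sub: "K \<subseteq> {a,b,c,d}" by (simp add: clanin_def)
  have fin: "finite K" using sub finite_subset by blast
  have cl: "\<And>i j k. i\<in>K \<Longrightarrow> j\<in>K \<Longrightarrow> k \<in> {a,b,c,d} \<Longrightarrow> k \<notin> K \<Longrightarrow> A k i = A k j"
  proof -
    fix i j k assume "i\<in>K" "j\<in>K" "k \<in> {a,b,c,d}" "k \<notin> K"
    then have "k \<in> {a,b,c,d} - K" by blast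
    then show "A k i = A k j" using K \<open>i\<in>K\<close> \<open>j\<in>K\<close> unfolding clanin_def by blast
  qed
  have cab: "a\<in>K \<Longrightarrow> b\<in>K \<Longrightarrow> c\<notin>K \<Longrightarrow> A c a = A c b" "a\<in>K \<Longrightarrow> b\<in>K \<Longrightarrow> d\<notin>K \<Longrightarrow> A d a = A d b"
    by (rule cl; auto)+
  have cac: "a\<in>K \<Longrightarrow> c\<in>K \<Longrightarrow> b\<notin>K \<Longrightarrow> A b a = A b c" "a\<in>K \<Longrightarrow> c\<in>K \<Longrightarrow> d\<notin>K \<Longrightarrow> A d a = A d c"
    by (rule cl; auto)+
  have cad: "a\<in>K \<Longrightarrow> d\<in>K \<Longrightarrow> b\<notin>K \<Longrightarrow> A b a = A b d" "a\<in>K \<Longrightarrow> d\<in>K \<Longrightarrow> c\<notin>K \<Longrightarrow> A c a = A c d"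
    by (rule cl; auto)+
  have cbc: "b\<in>K \<Longrightarrow> c\<in>K \<Longrightarrow> a\<notin>K \<Longrightarrow> A a b = A a c" "b\<in>K \<Longrightarrow> c\<in>K \<Longrightarrow> d\<notin>K \<Longrightarrow> A d b = A d c"
    by (rule cl; auto)+
  have cbd: "b\<in>K \<Longrightarrow> d\<in>K \<Longrightarrow> a\<notin>K \<Longrightarrow> A a b = A a d" "b\<in>K \<Longrightarrow> d\<in>K \<Longrightarrow> c\<notin>K \<Longrightarrow> A c b = A c d"
    by (rule cl; auto)+
  have ccd: "c\<in>K \<Longrightarrow> d\<in>K \<Longrightarrow> a\<notin>K \<Longrightarrow> A a c = A a d" "c\<in>K \<Longrightarrow> d\<in>K \<Longrightarrow> b\<notin>K \<Longrightarrow> A b c = A b d"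
    by (rule cl; auto)+
  note cs = cab cac cad cbc cbd ccd
  show "card K \<le> 1 \<or> K = {a,b,c,d}"
  proof -
    have m: "\<And>x. x \<in> K \<Longrightarrow> x = a \<or> x = b \<or> x = c \<or> x = d" using sub by auto
    have full: "a\<in>K \<Longrightarrow> b\<in>K \<Longrightarrow> c\<in>K \<Longrightarrow> d\<in>K \<Longrightarrow> card K \<le> 1 \<or> K = {a,b,c,d}" using sub by auto
    have s1: "b\<notin>K \<Longrightarrow> c\<notin>K \<Longrightarrow> d\<notin>K \<Longrightarrow> card K \<le> 1 \<or> K = {a,b,c,d}"
      by (rule disjI1, rule card_le1_eqI[OF fin]) (metis m)
    have s2: "a\<notin>K \<Longrightarrow> c\<notin>K \<Longrightarrow> d\<notin>K \<Longrightarrow> card K \<le> 1 \<or> K = {a,b,c,d}"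
      by (rule disjI1, rule card_le1_eqI[OF fin]) (metis m)
    have s3: "a\<notin>K \<Longrightarrow> b\<notin>K \<Longrightarrow> d\<notin>K \<Longrightarrow> card K \<le> 1 \<or> K = {a,b,c,d}"
      by (rule disjI1, rule card_le1_eqI[OF fin]) (metis m)
    have s4: "a\<notin>K \<Longrightarrow> b\<notin>K \<Longrightarrow> c\<notin>K \<Longrightarrow> card K \<le> 1 \<or> K = {a,b,c,d}"
      by (rule disjI1, rule card_le1_eqI[OF fin]) (metis m)
    show ?thesis
    proof (cases "a\<in>K")
      case True
      show ?thesis
      proof (cases "b\<in>K")
        case True
        show ?thesis
        proof (cases "c\<in>K")
          case True
          show ?thesis
          proof (cases "d\<in>K")
            case True
            show ?thesis using full \<open>a\<in>K\<close> \<open>b\<in>K\<close> \<open>c\<in>K\<close> \<open>d\<in>K\<close> by blast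
          next
            case False
            show ?thesis using abc cab cac cbc \<open>a\<in>K\<close> \<open>b\<in>K\<close> \<open>c\<in>K\<close> \<open>d\<notin>K\<close> by auto
          qed
        next
          case False
          show ?thesis
          proof (cases "d\<in>K")
            case True
            show ?thesis using abd cab cad cbd \<open>a\<in>K\<close> \<open>b\<in>K\<close> \<open>c\<notin>K\<close> \<open>d\<in>K\<close> by auto
          next
            case False
            show ?thesis using ab cab \<open>a\<in>K\<close> \<open>b\<in>K\<close> \<open>c\<notin>K\<close> \<open>d\<notin>K\<close> by auto
          qed
        qed
      next
        case False
        show ?thesis
        proof (cases "c\<in>K")
          case True
          show ?thesis
          proof (cases "d\<in>K")
            case True
            show ?thesis using acd cac cad ccd \<open>a\<in>K\<close> \<open>b\<notin>K\<close> \<open>c\<in>K\<close> \<open>d\<in>K\<close> by auto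
          next
            case False
            show ?thesis using ac cac \<open>a\<in>K\<close> \<open>b\<notin>K\<close> \<open>c\<in>K\<close> \<open>d\<notin>K\<close> by auto
          qed
        next
          case False
          show ?thesis
          proof (cases "d\<in>K")
            case True
            show ?thesis using ad cad \<open>a\<in>K\<close> \<open>b\<notin>K\<close> \<open>c\<notin>K\<close> \<open>d\<in>K\<close> by auto
          next
            case False
            show ?thesis using s1 \<open>a\<in>K\<close> \<open>b\<notin>K\<close> \<open>c\<notin>K\<close> \<open>d\<notin>K\<close> by blast
          qed
        qed
      qed
    next
      case False
      show ?thesis
      proof (cases "b\<in>K")
        case True
        show ?thesis
        proof (cases "c\<in>K")
          case True
          show ?thesis
          proof (cases "d\<in>K")
            case True
            show ?thesis using bcd cbc cbd ccd \<open>a\<notin>K\<close> \<open>b\<in>K\<close> \<open>c\<in>K\<close> \<open>d\<in>K\<close> by auto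
          next
            case False
            show ?thesis using bc cbc \<open>a\<notin>K\<close> \<open>b\<in>K\<close> \<open>c\<in>K\<close> \<open>d\<notin>K\<close> by auto
          qed
        next
          case False
          show ?thesis
          proof (cases "d\<in>K")
            case True
            show ?thesis using bd cbd \<open>a\<notin>K\<close> \<open>b\<in>K\<close> \<open>c\<notin>K\<close> \<open>d\<in>K\<close> by auto
          next
            case False
            show ?thesis using s2 \<open>a\<notin>K\<close> \<open>b\<in>K\<close> \<open>c\<notin>K\<close> \<open>d\<notin>K\<close> by blast
          qed
        qed
      next
        case False
        show ?thesis
        proof (cases "c\<in>K")
          case True
          show ?thesis
          proof (cases "d\<in>K")
            case True
            show ?thesis using cd ccd \<open>a\<notin>K\<close> \<open>b\<notin>K\<close> \<open>c\<in>K\<close> \<open>d\<in>K\<close> by auto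
          next
            case False
            show ?thesis using s3 \<open>a\<notin>K\<close> \<open>b\<notin>K\<close> \<open>c\<in>K\<close> \<open>d\<notin>K\<close> by blast
          qed
        next
          case False
          show ?thesis
          proof (cases "d\<in>K")
            case True
            show ?thesis using s4 \<open>a\<notin>K\<close> \<open>b\<notin>K\<close> \<open>c\<notin>K\<close> \<open>d\<in>K\<close> by blast
          next
            case False
            show ?thesis using s1 \<open>a\<notin>K\<close> \<open>b\<notin>K\<close> \<open>c\<notin>K\<close> \<open>d\<notin>K\<close> by blast
          qed
        qed
      qed
    qed
  qed
qed

end

context gt begin

lemma claimD:
  assumes "finite Y" "Y \<subseteq> {0..<n}" "2 \<le> card Y"
    and "\<forall>Z. Z \<subseteq> Y \<longrightarrow> card Z = 3 \<or> card Z = 4 \<longrightarrow> \<not> indec Z"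
  shows "\<exists>P Q l. P \<union> Q = Y \<and> P \<inter> Q = {} \<and> P \<noteq> {} \<and> Q \<noteq> {} \<and> (\<forall>p\<in>P. \<forall>q\<in>Q. A p q = l)"
  using assms
proof (induction Y rule: finite_induct)
  case empty then show ?case by simp
next
  case (insert v W)
  have vn: "v < n" using insert.prems by auto
  have Wn: "W \<subseteq> {0..<n}" using insert.prems by auto
  have good: "\<And>Z. Z \<subseteq> insert v W \<Longrightarrow> card Z = 3 \<or> card Z = 4 \<Longrightarrow> \<not> indec Z"
    using insert.prems by blast
  have goodW: "\<forall>Z. Z \<subseteq> W \<longrightarrow> card Z = 3 \<or> card Z = 4 \<longrightarrow> \<not> indec Z"
    using good by blast
  show ?case
  proof (cases "card W \<le> 1")
    case True
    have "card W = 1" using insert True by simp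
    then obtain w where W: "W = {w}" by (auto simp: card_Suc_eq)
    have "v \<noteq> w" using insert W by auto
    show ?thesis
      by (rule exI[of _ "{v}"], rule exI[of _ "{w}"], rule exI[of _ "A v w"]) (use W \<open>v \<noteq> w\<close> in auto)
  next
    case False
    then have "2 \<le> card W" by simp
    then have "\<exists>P Q l. P \<union> Q = W \<and> P \<inter> Q = {} \<and> P \<noteq> {} \<and> Q \<noteq> {} \<and> (\<forall>p\<in>P. \<forall>q\<in>Q. A p q = l)"
      using insert.IH[OF Wn _ goodW] by blast
    then obtain P Q l where PQ: "P \<union> Q = W" "P \<inter> Q = {}" "P \<noteq> {}" "Q \<noteq> {}"
      and PQl0: "\<forall>p\<in>P. \<forall>q\<in>Q. A p q = l"
      by blast
    have PQl: "\<And>p q. p\<in>P \<Longrightarrow> q\<in>Q \<Longrightarrow> A p q = l" using PQl0 by blast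
    have Pn: "\<And>p. p \<in> P \<Longrightarrow> p < n" and Qn: "\<And>q. q \<in> Q \<Longrightarrow> q < n" using PQ Wn by auto
    have vP: "v \<notin> P" and vQ: "v \<notin> Q" using PQ insert by auto
    have PQd: "\<And>p q. p\<in>P \<Longrightarrow> q\<in>Q \<Longrightarrow> p \<noteq> q" using PQ by auto
    have QPl: "\<And>p q. p\<in>P \<Longrightarrow> q\<in>Q \<Longrightarrow> A q p = 1 - l"
      using PQl skew Pn Qn PQd by metis
    define Pb where "Pb = {p\<in>P. A p v \<noteq> l}"
    define Qb where "Qb = {q\<in>Q. A v q \<noteq> l}"
    show ?thesis
    proof (cases "Pb = {}")
      case True
      then have "\<forall>p\<in>P. A p v = l" unfolding Pb_def by blast+
      then show ?thesis
        by (intro exI[of _ P] exI[of _ "insert v Q"] exI[of _ l]) (use PQ PQl vP in auto)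
    next
      case PbN: False
      show ?thesis
      proof (cases "Qb = {}")
        case True
        then have "\<forall>q\<in>Q. A v q = l" unfolding Qb_def by blast+
        then show ?thesis
          by (intro exI[of _ "insert v P"] exI[of _ Q] exI[of _ l]) (use PQ PQl vQ in auto)
      next
        case QbN: False
        obtain p1 where p1: "p1 \<in> Pb" using PbN by auto
        obtain q0 where q0: "q0 \<in> Qb" using QbN by auto
        have tri: "A v p = A v q" if p: "p \<in> Pb" and q: "q \<in> Qb" for p q
        proof (rule ccontr)
          assume ne: "A v p \<noteq> A v q"
          have pP: "p \<in> P" and qQ: "q \<in> Q" using p q unfolding Pb_def Qb_def by blast+
          have "p \<noteq> q" "v \<noteq> p" "v \<noteq> q" using PQd pP qQ vP vQ by auto
          have "A p v \<noteq> l" "A v q \<noteq> l" using p q unfolding Pb_def Qb_def by blast+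
          have "A q v = 1 - A v q" using skew vn Qn qQ \<open>v \<noteq> q\<close> by metis
          have "indec {v,p,q}"
            by (rule indec3I) (use \<open>p \<noteq> q\<close> \<open>v \<noteq> p\<close> \<open>v \<noteq> q\<close> ne \<open>A p v \<noteq> l\<close> \<open>A v q \<noteq> l\<close>
                \<open>A q v = 1 - A v q\<close> PQl[OF pP qQ] QPl[OF pP qQ] in auto)
          moreover have "{v,p,q} \<subseteq> insert v W" "card {v,p,q} = 3"
            using pP qQ PQ \<open>p \<noteq> q\<close> \<open>v \<noteq> p\<close> \<open>v \<noteq> q\<close> by auto
          ultimately show False using good by blast
        qed
        define \<alpha> where "\<alpha> = A v p1"
        have Pa: "\<And>p. p \<in> Pb \<Longrightarrow> A v p = \<alpha>" using tri q0 \<alpha>_def p1 by metis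
        have Qa: "\<And>q. q \<in> Qb \<Longrightarrow> A v q = \<alpha>" using tri p1 \<alpha>_def by metis
        have q0l: "A v q0 \<noteq> l" using q0 unfolding Qb_def by blast+
        have al: "\<alpha> \<noteq> l" using Qa[OF q0] q0l by simp
        have p1P: "p1 \<in> P" and q0Q: "q0 \<in> Q" using p1 q0 unfolding Pb_def Qb_def by blast+
        have "v \<noteq> p1" "v \<noteq> q0" "p1 \<noteq> q0" using vP vQ p1P q0Q PQd by auto
        have Ap1v: "A p1 v = 1 - \<alpha>" using skew vn Pn p1P \<open>v \<noteq> p1\<close> \<alpha>_def by metis
        have Aq0v: "A q0 v = 1 - \<alpha>" using skew vn Qn q0Q \<open>v \<noteq> q0\<close> Qa q0 by metis
        have "A p1 v \<noteq> l" using p1 unfolding Pb_def by blast+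
        then have al2: "1 - \<alpha> \<noteq> l" using Ap1v by simp
        show ?thesis
        proof (cases "P - Pb = {}")
          case PgE: True
          show ?thesis
          proof (cases "Q - Qb = {}")
            case True
            have "\<forall>w\<in>W. A v w = \<alpha>" using PgE True PQ Pa Qa by blast
            then show ?thesis
              by (intro exI[of _ "{v}"] exI[of _ W] exI[of _ \<alpha>]) (use PQ insert.hyps(2) in auto)
          next
            case False
            have key: "A u q' = l" if u: "u \<in> insert v W - (Q - Qb)" and q': "q' \<in> Q - Qb" for u q'
            proof -
              have q'Q: "q' \<in> Q" and vq': "A v q' = l" using q' unfolding Qb_def by blast+
              consider "u = v" | "u \<in> P" | "u \<in> Qb" using u PQ by blast
              then show ?thesis
              proof cases
                case 1 then show ?thesis using vq' by simp
              next
                case 2 then show ?thesis using PQl q'Q by simp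
              next
                case 3
                show ?thesis
                proof (rule ccontr)
                  assume ne: "A u q' \<noteq> l"
                  have uQ: "u \<in> Q" using 3 unfolding Qb_def by blast+
                  have "u \<noteq> q'" using 3 q' by blast
                  have "v \<noteq> u" "v \<noteq> q'" using vQ uQ q'Q by blast+
                  have "p1 \<noteq> u" "p1 \<noteq> q'" using PQd p1P uQ q'Q by blast+
                  have d: "distinct [v,p1,u,q']" using \<open>u \<noteq> q'\<close> \<open>v \<noteq> u\<close> \<open>v \<noteq> q'\<close> \<open>p1 \<noteq> u\<close> \<open>p1 \<noteq> q'\<close> \<open>v \<noteq> p1\<close> by simp
                  have Avu: "A v u = \<alpha>" using Qa 3 by simp
                  have Auv: "A u v = 1 - \<alpha>" using skew vn Qn uQ Avu d by (metis distinct_length_2_or_more)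
                  have Aq'v: "A q' v = 1 - l" using skew vn Qn q'Q vq' d by (metis distinct.simps(2) list.set_intros(2,1))
                  have Aq'u: "A q' u = 1 - A u q'" using skew Qn uQ q'Q d by (metis distinct.simps(2) list.set_intros)
                  have "indec {v,p1,u,q'}"
                    by (rule indec4I) (insert d ne al al2 Pa[OF p1] Avu Auv Ap1v Aq'v Aq'u vq'
                       PQl[OF p1P uQ] PQl[OF p1P q'Q] QPl[OF p1P uQ] QPl[OF p1P q'Q], simp_all)
                  moreover have "{v,p1,u,q'} \<subseteq> insert v W" "card {v,p1,u,q'} = 4"
                    using d p1P uQ q'Q PQ by auto
                  ultimately show False using good by blast
                qed
              qed
            qed
            obtain q' where "q' \<in> Q - Qb" using False by auto
            then show ?thesis
              by (intro exI[of _ "insert v W - (Q - Qb)"] exI[of _ "Q - Qb"] exI[of _ l])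
                 (use key PQ in auto)
          qed
        next
          case False
          have key: "A p' u = l" if p': "p' \<in> P - Pb" and u: "u \<in> insert v W - (P - Pb)" for u p'
          proof -
            have p'P: "p' \<in> P" and p'v: "A p' v = l" using p' unfolding Pb_def by blast+
            consider "u = v" | "u \<in> Q" | "u \<in> Pb" using u PQ by blast
            then show ?thesis
            proof cases
              case 1 then show ?thesis using p'v by simp
            next
              case 2 then show ?thesis using PQl p'P by simp
            next
              case 3
              show ?thesis
              proof (rule ccontr)
                assume ne: "A p' u \<noteq> l"
                have uP: "u \<in> P" using 3 unfolding Pb_def by blast+
                have "u \<noteq> p'" using 3 p' by blast
                have "v \<noteq> u" "v \<noteq> p'" using vP uP p'P by blast+
                have "u \<noteq> q0" "p' \<noteq> q0" using PQd uP p'P q0Q by blast+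
                have d: "distinct [v,u,q0,p']" using \<open>u \<noteq> p'\<close> \<open>v \<noteq> u\<close> \<open>v \<noteq> p'\<close> \<open>u \<noteq> q0\<close> \<open>p' \<noteq> q0\<close> \<open>v \<noteq> q0\<close> by simp
                have Avu: "A v u = \<alpha>" using Pa 3 by simp
                have Auv: "A u v = 1 - \<alpha>" using skew vn Pn uP Avu d by (metis distinct_length_2_or_more)
                have Avp': "A v p' = 1 - l" using skew vn Pn p'P p'v d
                  by (metis distinct.simps(2) list.set_intros(2,1))
                have Aup': "A u p' = 1 - A p' u" using skew Pn uP p'P d by (metis distinct.simps(2) list.set_intros)
                have "indec {v,u,q0,p'}"
                  by (rule indec4I) (insert d ne al al2 Qa[OF q0] Avu Auv Aq0v Avp' Aup' p'v
                     PQl[OF uP q0Q] PQl[OF p'P q0Q] QPl[OF uP q0Q] QPl[OF p'P q0Q], simp_all)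
                moreover have "{v,u,q0,p'} \<subseteq> insert v W" "card {v,u,q0,p'} = 4"
                  using d uP q0Q p'P PQ by auto
                ultimately show False using good by blast
              qed
            qed
          qed
          obtain p' where "p' \<in> P - Pb" using False by auto
          then show ?thesis
            by (intro exI[of _ "P - Pb"] exI[of _ "insert v W - (P - Pb)"] exI[of _ l])
               (use key PQ in auto)
        qed
      qed
    qed
  qed
qed

end

context gt begin

lemma finV: "X \<subseteq> {0..<n} \<Longrightarrow> finite X"
  using finite_subset by blast

lemma L3:
  assumes iV: "indec {0..<n}" and n3: "3 \<le> n"
  shows "\<exists>Z \<subseteq> {0..<n}. (card Z = 3 \<or> card Z = 4) \<and> indec Z"
proof (rule ccontr)
  assume "\<not> ?thesis"
  then have good: "\<forall>Z. Z \<subseteq> {0..<n} \<longrightarrow> card Z = 3 \<or> card Z = 4 \<longrightarrow> \<not> indec Z" by blast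
  have "\<exists>P Q l. P \<union> Q = {0..<n} \<and> P \<inter> Q = {} \<and> P \<noteq> {} \<and> Q \<noteq> {} \<and> (\<forall>p\<in>P. \<forall>q\<in>Q. A p q = l)"
    by (rule claimD) (use n3 good in auto)
  then obtain P Q l where PQ: "P \<union> Q = {0..<n}" "P \<inter> Q = {}" "P \<noteq> {}" "Q \<noteq> {}"
    and l: "\<forall>p\<in>P. \<forall>q\<in>Q. A p q = l" by blast
  have fin: "finite P" "finite Q" using PQ(1) finV by blast+
  have cs: "card P + card Q = n" using card_Un_disjoint[OF fin PQ(2)] PQ(1) by simp
  show False
  proof (cases "2 \<le> card P")
    case True
    have "clanin {0..<n} P" unfolding clanin_def
    proof (intro conjI ballI)
      show "P \<subseteq> {0..<n}" using PQ(1) by blast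
      fix i j k assume i: "i\<in>P" and j: "j\<in>P" and k: "k \<in> {0..<n} - P"
      then have kQ: "k \<in> Q" using PQ(1) by blast
      have "i < n" "j < n" "k < n" "i \<noteq> k" "j \<noteq> k" using i j k PQ(1) by auto
      then have "A k i = 1 - A i k" "A k j = 1 - A j k" using skew by blast+
      then show "A k i = A k j" using l i j kQ by simp
    qed
    then have "P = {0..<n}" using indecD[OF iV _ True] by blast
    then show False using PQ by blast
  next
    case False
    then have c2: "2 \<le> card Q" using cs n3 by linarith
    have "clanin {0..<n} Q" unfolding clanin_def
    proof (intro conjI ballI)
      show "Q \<subseteq> {0..<n}" using PQ(1) by blast
      fix i j k assume i: "i\<in>Q" and j: "j\<in>Q" and k: "k \<in> {0..<n} - Q"
      then have kP: "k \<in> P" using PQ(1) by blast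
      then show "A k i = A k j" using l i j by simp
    qed
    then have "Q = {0..<n}" using indecD[OF iV _ c2] by blast
    then show False using PQ by blast
  qed
qed

lemma PL:
  assumes X: "X \<subseteq> {0..<n}" and iX: "indec X" and v: "v \<notin> X"
    and ni: "\<not> indec (insert v X)"
  shows "ext X v \<or> (\<exists>s\<in>X. twin X s v)"
proof -
  from ni obtain K where K: "clanin (insert v X) K" and Kn: "\<not> card K \<le> 1" "K \<noteq> insert v X"
    unfolding indec_def by blast
  have Ksub: "K \<subseteq> insert v X" using K unfolding clanin_def by blast
  have clK: "\<And>i j k. i\<in>K \<Longrightarrow> j\<in>K \<Longrightarrow> k \<in> insert v X \<Longrightarrow> k \<notin> K \<Longrightarrow> A k i = A k j"
    using K unfolding clanin_def by blast
  have "clanin X (K \<inter> X)" using clanin_restrict[OF K] by blast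
  then have "card (K \<inter> X) \<le> 1 \<or> K \<inter> X = X" using iX unfolding indec_def by blast
  then show ?thesis
  proof
    assume XK: "K \<inter> X = X"
    then have "v \<notin> K" using Kn(2) Ksub by blast
    then have "ext X v" unfolding ext_def using clK XK by blast
    then show ?thesis by blast
  next
    assume c1: "card (K \<inter> X) \<le> 1"
    have finX: "finite X" using X finV by blast
    have finK: "finite K" using Ksub finX finite_subset by blast
    have vK: "v \<in> K"
    proof (rule ccontr)
      assume "v \<notin> K" then have "K = K \<inter> X" using Ksub by blast
      then show False using c1 Kn(1) by simp
    qed
    have "K \<noteq> {v}" using Kn(1) by auto
    then obtain s where sK: "s \<in> K" "s \<noteq> v" using vK by blast
    then have sX: "s \<in> X" using Ksub by blast
    have "twin X s v" unfolding twin_def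
    proof
      fix w assume w: "w \<in> X - {s}"
      have "w \<notin> K"
      proof
        assume "w \<in> K"
        then have "{s,w} \<subseteq> K \<inter> X" using sK sX w by blast
        moreover have "finite (K \<inter> X)" using finK by blast
        ultimately have "card {s,w} \<le> card (K \<inter> X)" by (rule card_mono[rotated])
        then show False using c1 w by auto
      qed
      moreover have "w \<in> insert v X" using w by blast
      ultimately show "A w s = A w v" using clK[OF sK(1) vK] by blast
    qed
    then show ?thesis using sX by blast
  qed
qed

lemma twin_unique:
  assumes iX: "indec X" and c3: "3 \<le> card X" and st: "s \<in> X" "t \<in> X"
    and ts: "twin X s v" and tt: "twin X t v"
  shows "s = t"
proof (rule ccontr)
  assume st': "s \<noteq> t"
  have "clanin X {s,t}" unfolding clanin_def
  proof (intro conjI ballI)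
    show "{s,t} \<subseteq> X" using st by blast
    fix i j k assume i: "i \<in> {s,t}" and j: "j \<in> {s,t}" and k: "k \<in> X - {s,t}"
    then have "A k s = A k v" "A k t = A k v" using ts tt unfolding twin_def by blast+
    then show "A k i = A k j" using i j by auto
  qed
  moreover have "2 \<le> card {s,t}" using st' by simp
  ultimately have "{s,t} = X" using indecD[OF iX] by blast
  then show False using c3 st' by auto
qed

lemma ext_twin:
  assumes X: "X \<subseteq> {0..<n}" and iX: "indec X" and c3: "3 \<le> card X" and s: "s \<in> X"
    and v: "v < n" "v \<notin> X" and e: "ext X v" and t: "twin X s v"
  shows False
proof -
  have finX: "finite X" using X finV by blast
  have "clanin X (X - {s})" unfolding clanin_def
  proof (intro conjI ballI)
    show "X - {s} \<subseteq> X" by blast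
    fix i j k assume i: "i \<in> X - {s}" and j: "j \<in> X - {s}" and k: "k \<in> X - (X - {s})"
    then have ks: "k = s" by blast
    have sn: "s < n" using s X by auto
    have r: "A s u = A v u" if u: "u \<in> X - {s}" for u
    proof -
      have un: "u < n" "u \<noteq> s" "u \<noteq> v" using u X v by auto
      have "A s u = 1 - A u s" using skew[of u s] un sn by simp
      also have "A u s = A u v" using t u unfolding twin_def by blast
      also have "1 - A u v = A v u" using skew[of v u] un v by simp
      finally show ?thesis .
    qed
    have "A v i = A v j" using e i j unfolding ext_def by blast
    then show "A k i = A k j" using r[OF i] r[OF j] ks by simp
  qed
  moreover have "2 \<le> card (X - {s})" using c3 s finX by simp
  ultimately have "X - {s} = X" using indecD[OF iX] by blast
  then show False using s by blast
qed

end

context gt begin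

lemma ERL:
  assumes iV: "indec {0..<n}" and X: "X \<subseteq> {0..<n}" and iX: "indec X" and c3: "3 \<le> card X"
    and XV: "X \<noteq> {0..<n}"
    and none: "\<forall>v\<in>{0..<n} - X. \<not> indec (insert v X)"
  shows "\<exists>z y. z \<in> {0..<n} - X \<and> y \<in> {0..<n} - X \<and> z \<noteq> y \<and> indec (insert z (insert y X))"
proof -
  have finX: "finite X" using X finV by blast
  have "\<not> clanin {0..<n} X"
  proof
    assume "clanin {0..<n} X"
    then have "X = {0..<n}" using indecD[OF iV] c3 by simp
    then show False using XV by simp
  qed
  then obtain i j k where ij: "i \<in> X" "j \<in> X" and k: "k \<in> {0..<n} - X" and ne: "A k i \<noteq> A k j"
    using X unfolding clanin_def by blast
  have "\<not> ext X k" using ij ne unfolding ext_def by blast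
  moreover have "\<not> indec (insert k X)" using none k by blast
  ultimately obtain s where s: "s \<in> X" "twin X s k" using PL[OF X iX] k by blast
  define K where "K = insert s {u \<in> {0..<n} - X. twin X s u}"
  have kK: "k \<in> K" using k s by (simp add: K_def)
  have sk: "s \<noteq> k" using s k by blast
  have "card (X - {s}) \<ge> 2" using c3 s finX by simp
  then have "X - {s} \<noteq> {}" by (metis card.empty not_numeral_le_zero)
  then obtain t where t: "t \<in> X" "t \<noteq> s" by blast
  have tK: "t \<notin> K" using t by (auto simp: K_def)
  have KV: "K \<subseteq> {0..<n}" using s X by (auto simp: K_def)
  have "\<not> clanin {0..<n} K"
  proof
    assume cK: "clanin {0..<n} K"
    have "{s,k} \<subseteq> K" using kK by (simp add: K_def)
    moreover have "finite K" using KV finV by blast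
    ultimately have "card {s,k} \<le> card K" by (rule card_mono[rotated])
    then have "2 \<le> card K" using sk by simp
    then have "K = {0..<n}" using indecD[OF iV cK] by blast
    then show False using tK t X by blast
  qed
  then obtain p q y where pq: "p \<in> K" "q \<in> K" and y: "y \<in> {0..<n} - K" and yne: "A y p \<noteq> A y q"
    using KV unfolding clanin_def by blast
  obtain z where zK: "z \<in> K" "z \<noteq> s" and yz: "A y s \<noteq> A y z"
  proof (cases "A y p = A y s")
    case True
    then have "A y q \<noteq> A y s" using yne by simp
    then show ?thesis using that[of q] pq by metis
  next
    case False
    then show ?thesis using that[of p] pq by metis
  qed
  have z: "z \<in> {0..<n} - X" "twin X s z" using zK by (auto simp: K_def)
  have ys: "y \<noteq> s" using y by (auto simp: K_def)
  have yX: "y \<notin> X"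
  proof
    assume "y \<in> X"
    then have "A y s = A y z" using z(2) ys unfolding twin_def by blast
    then show False using yz by simp
  qed
  have yV: "y \<in> {0..<n} - X" using y yX by blast
  have nty: "\<not> twin X s y" using y yV by (auto simp: K_def)
  have zy: "z \<noteq> y" using zK y by blast
  have sn: "s < n" using s X by auto
  have yn: "y < n" and zn: "z < n" using yV z by auto
  let ?Z = "insert z (insert y X)"
  have indecZ: "indec ?Z"
    unfolding indec_def
  proof (intro allI impI)
    fix K' assume K': "clanin ?Z K'"
    have K'sub: "K' \<subseteq> ?Z" using K' unfolding clanin_def by blast
    have cl: "\<And>i j k. i \<in> K' \<Longrightarrow> j \<in> K' \<Longrightarrow> k \<in> ?Z \<Longrightarrow> k \<notin> K' \<Longrightarrow> A k i = A k j"
      using K' unfolding clanin_def by blast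
    have "clanin X (K' \<inter> X)" using clanin_restrict[OF K'] by blast
    then have "card (K' \<inter> X) \<le> 1 \<or> K' \<inter> X = X" using iX unfolding indec_def by blast
    then show "card K' \<le> 1 \<or> K' = ?Z"
    proof
      assume XK: "K' \<inter> X = X"
      have zK': "z \<in> K'"
      proof (rule ccontr)
        assume "z \<notin> K'"
        then have "ext X z" unfolding ext_def using cl XK by blast
        then show False using ext_twin[OF X iX c3 s(1) zn _ _ z(2)] z(1) by blast
      qed
      have yK': "y \<in> K'"
      proof (rule ccontr)
        assume "y \<notin> K'"
        then have "A y s = A y z" using cl[OF _ zK'] XK s(1) by blast
        then show False using yz by simp
      qed
      show ?thesis using XK zK' yK' K'sub by blast
    next
      assume c1: "card (K' \<inter> X) \<le> 1"
      have finK': "finite K'" using K'sub finX finite_subset by blast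
      have uniq: "a = b" if "a \<in> K'" "b \<in> K'" "a \<in> X" "b \<in> X" for a b
      proof -
        have "finite (K' \<inter> X)" using finK' by blast
        then show ?thesis using c1 that card_le_Suc0_iff_eq[of "K' \<inter> X"] by auto
      qed
      have twinr: "twin X r v" if r: "r \<in> K'" "r \<in> X" and v: "v \<in> K'" for r v
        unfolding twin_def
      proof
        fix u assume u: "u \<in> X - {r}"
        then have "u \<notin> K'" using uniq r by blast
        then show "A u r = A u v" using cl[OF r(1) v] u by blast
      qed
      have F1: False if "z \<in> K'" "y \<in> K'"
      proof -
        have "twin X s y" unfolding twin_def
        proof
          fix w assume w: "w \<in> X - {s}"
          show "A w s = A w y"
          proof (cases "w \<in> K'")
            case False
            then have "A w z = A w y" using cl[OF that] w by blast
            moreover have "A w s = A w z" using z(2) w unfolding twin_def by blast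
            ultimately show ?thesis by simp
          next
            case True
            then have "twin X w z" using twinr w that(1) by blast
            then have "w = s" using twin_unique[OF iX c3 _ s(1) _ z(2)] w by blast
            then show ?thesis using w by blast
          qed
        qed
        then show False using nty by blast
      qed
      have F2: False if "z \<in> K'" "y \<notin> K'" "r \<in> K'" "r \<in> X" for r
      proof -
        have "twin X r z" using twinr that by blast
        then have "r = s" using twin_unique[OF iX c3 that(4) s(1) _ z(2)] by blast
        then have "A y s = A y z" using cl[OF that(3) that(1)] that(2) by blast
        then show False using yz by simp
      qed
      have F3: False if "z \<notin> K'" "y \<in> K'" "r \<in> K'" "r \<in> X" for r
      proof -
        have tr: "twin X r y" using twinr that by blast
        have rs: "r \<noteq> s" using tr nty by blast
        have rn: "r < n" using that X by auto
        have zr: "A z r = A z y" using cl[OF that(3) that(2)] that(1) by blast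
        have "A s r = A s y" using tr s(1) rs unfolding twin_def by blast
        moreover have "A r s = 1 - A s r" using skew[of s r] sn rn rs by simp
        moreover have "A y s = 1 - A s y" using skew[of s y] sn yn ys by simp
        ultimately have e1: "A y s = A r s" by simp
        have e2: "A r s = A r z" using z(2) that(4) rs unfolding twin_def by blast
        have rz: "r \<noteq> z" using that(4) z(1) by blast
        have "A r z = 1 - A z r" using skew[of z r] zn rn rz by simp
        moreover have "A y z = 1 - A z y" using skew[of z y] zn yn zy by simp
        ultimately have e3: "A r z = A y z" using zr by simp
        show False using e1 e2 e3 yz by simp
      qed
      have "\<forall>a\<in>K'. \<forall>b\<in>K'. a = b"
      proof (intro ballI)
        fix a b assume a: "a \<in> K'" and b: "b \<in> K'"
        show "a = b"
        proof (cases "z \<in> K'")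
          case True
          then have ny: "y \<notin> K'" using F1 by blast
          then have "a = z" "b = z" using F2[OF True ny] a b K'sub by blast+
          then show ?thesis by simp
        next
          case False
          show ?thesis
          proof (cases "y \<in> K'")
            case True
            then have "a = y" "b = y" using F3[OF False True, of a] F3[OF False True, of b] a b K'sub False by auto
            then show ?thesis by simp
          next
            case False
            then have "a \<in> X" "b \<in> X" using \<open>z \<notin> K'\<close> a b K'sub by blast+
            then show ?thesis using uniq a b by blast
          qed
        qed
      qed
      then show ?thesis using card_le1_eqI[OF finK'] by blast
    qed
  qed
  show ?thesis using z(1) yV zy indecZ by blast
qed

lemma twin_swap:
  assumes X: "X \<subseteq> {0..<n}" and s: "s \<in> X" and x: "x < n" "x \<notin> X" and t: "twin X s x"
    and iX: "indec X"
  shows "indec (insert x (X - {s}))"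
  unfolding indec_def
proof (intro allI impI)
  let ?X1 = "insert x (X - {s})"
  fix K assume K: "clanin ?X1 K"
  define f where "f = (\<lambda>u. if u = x then s else u)"
  have Ksub: "K \<subseteq> ?X1" using K unfolding clanin_def by blast
  have sn: "s < n" using s X by auto
  have sx: "s \<noteq> x" using s x by blast
  have key: "A (f u) (f w) = A u w" if u: "u \<in> ?X1" and w: "w \<in> ?X1" and uw: "u \<noteq> w" for u w
  proof (cases "u = x")
    case True
    then have w': "w \<in> X - {s}" "w \<noteq> x" using w uw by auto
    have wn: "w < n" using w' X by auto
    have "A w s = A w x" using t w' unfolding twin_def by blast
    moreover have "A s w = 1 - A w s" using skew[of w s] wn sn w' by simp
    moreover have "A x w = 1 - A w x" using skew[of w x] wn x w' by simp
    ultimately show ?thesis using True w' by (simp add: f_def)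
  next
    case False
    then have u': "u \<in> X - {s}" using u by blast
    show ?thesis
    proof (cases "w = x")
      case True
      have "A u s = A u x" using t u' unfolding twin_def by blast
      then show ?thesis using True False by (simp add: f_def)
    next
      case False
      then show ?thesis using \<open>u \<noteq> x\<close> by (simp add: f_def)
    qed
  qed
  have inj: "inj_on f ?X1"
    unfolding inj_on_def f_def using sx by auto
  have fX1: "f ` ?X1 = X" using s sx x unfolding f_def by auto
  have "clanin X (f ` K)" unfolding clanin_def
  proof (intro conjI ballI)
    show "f ` K \<subseteq> X" using Ksub fX1 by blast
    fix i' j' k' assume i': "i' \<in> f ` K" and j': "j' \<in> f ` K" and k': "k' \<in> X - f ` K"
    obtain i j where ij: "i \<in> K" "j \<in> K" "i' = f i" "j' = f j" using i' j' by blast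
    obtain k where k: "k \<in> ?X1" "k' = f k" using k' fX1 by (metis DiffD1 imageE)
    have kK: "k \<notin> K" using k k' by blast
    have "A k i = A k j" using K ij kK k unfolding clanin_def by blast
    moreover have "A (f k) (f i) = A k i" using key k(1) ij Ksub kK by (metis subsetD)
    moreover have "A (f k) (f j) = A k j" using key k(1) ij Ksub kK by (metis subsetD)
    ultimately show "A k' i' = A k' j'" using ij k by simp
  qed
  then have "card (f ` K) \<le> 1 \<or> f ` K = X" using iX unfolding indec_def by blast
  moreover have "card (f ` K) = card K" using card_image inj_on_subset[OF inj Ksub] by blast
  moreover have "K = ?X1" if "f ` K = X"
    using that fX1 inj Ksub by (metis inj_on_image_eq_iff order_refl)
  ultimately show "card K \<le> 1 \<or> K = ?X1" by auto
qed

end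

locale gts = gt n A for n A +
  fixes B :: "nat \<Rightarrow> nat \<Rightarrow> real"
  assumes gtB: "gen_tournament n B"
    and minors: "\<forall>S. S \<subseteq> {0..<n} \<and> S \<noteq> {} \<longrightarrow> principal_minor A S = principal_minor B S"
begin

lemma gtB': "gt n B" using gtB by (simp add: gt_def)

lemma skewB: "i < n \<Longrightarrow> j < n \<Longrightarrow> i \<noteq> j \<Longrightarrow> B j i = 1 - B i j"
  using gt.skew[OF gtB'] by blast

lemma diagB: "i < n \<Longrightarrow> B i i = 0"
  using gt.diag[OF gtB'] by blast

definition R :: "bool \<Rightarrow> nat \<Rightarrow> nat \<Rightarrow> bool" where
  "R e i j \<longleftrightarrow> (if e then B i j = A i j else B i j = A j i)"

definition modeon :: "bool \<Rightarrow> nat set \<Rightarrow> bool" where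
  "modeon e Y \<longleftrightarrow> (\<forall>i\<in>Y. \<forall>j\<in>Y. R e i j)"

definition cons :: "nat set \<Rightarrow> bool" where
  "cons Y \<longleftrightarrow> (\<exists>e. modeon e Y)"

lemma R_diag: "i < n \<Longrightarrow> R e i i"
  by (simp add: R_def diag diagB)

lemma R_sym: "i < n \<Longrightarrow> j < n \<Longrightarrow> R e i j \<Longrightarrow> R e j i"
proof (cases "i = j")
  case False
  assume "i < n" "j < n" "R e i j"
  then show ?thesis using False skew[of i j] skewB[of i j]
    by (cases e) (auto simp: R_def)
qed simp

lemma mA2: "i < n \<Longrightarrow> j < n \<Longrightarrow> i \<noteq> j \<Longrightarrow> A i j * A j i = B i j * B j i"
proof -
  assume h: "i < n" "j < n" "i \<noteq> j"
  have "principal_minor A {i,j} = principal_minor B {i,j}" using minors h by auto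
  then show ?thesis using h by (simp add: pm2 diag diagB)
qed

lemma R2: "i < n \<Longrightarrow> j < n \<Longrightarrow> R e i j \<or> R (\<not> e) i j"
proof (cases "i = j")
  case True
  assume "i < n" then show ?thesis using True R_diag by simp
next
  case False
  assume h: "i < n" "j < n"
  have "A i j * A j i = B i j * B j i" using mA2 h False by blast
  moreover have "A j i = 1 - A i j" "B j i = 1 - B i j" using skew skewB h False by blast+
  ultimately have "A i j * (1 - A i j) = B i j * (1 - B i j)" by simp
  then have "(B i j - A i j) * (B i j - (1 - A i j)) = 0" by (simp add: algebra_simps)
  then have "B i j = A i j \<or> B i j = A j i" using \<open>A j i = 1 - A i j\<close> by auto
  then show ?thesis by (cases e) (auto simp: R_def)
qed

lemma R_neutral: "R e i j \<Longrightarrow> R (\<not> e) i j \<Longrightarrow> A i j = A j i"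
  by (cases e) (auto simp: R_def)

lemma R_neutral2: "A i j = A j i \<Longrightarrow> R e i j \<Longrightarrow> R e' i j"
  by (cases e; cases e') (auto simp: R_def)

lemma notR: "i < n \<Longrightarrow> j < n \<Longrightarrow> \<not> R e i j \<Longrightarrow> R (\<not> e) i j \<and> A i j \<noteq> A j i"
  using R2[of i j e] R_neutral2[of i j "\<not> e" e] by auto

lemma apex:
  assumes n: "i < n" "j < n" "k < n" and d: "i \<noteq> j" "i \<noteq> k" "j \<noteq> k"
    and r: "R e i j" "R e i k" "R (\<not> e) j k"
  shows "A j k = A k j \<or> A i j = A i k"
proof -
  have "principal_minor A {i,j,k} = principal_minor B {i,j,k}" using minors n by auto
  then have eq: "A i j * A j k * A k i + A i k * A j i * A k j = B i j * B j k * B k i + B i k * B j i * B k j"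
    using d n by (simp add: pm3 diag diagB algebra_simps)
  have a: "A j i = 1 - A i j" "A k i = 1 - A i k" "A k j = 1 - A j k" using skew n d by metis+
  have b: "B j i = 1 - B i j" "B k i = 1 - B i k" "B k j = 1 - B j k" using skewB n d by metis+
  have "(2 * A j k - 1) * (A i j - A i k) = 0"
  proof (cases e)
    case True
    then have "B i j = A i j" "B i k = A i k" "B j k = A k j" using r by (auto simp: R_def)
    then have bv: "B i j = A i j" "B i k = A i k" "B j k = 1 - A j k" "B j i = 1 - A i j"
      "B k i = 1 - A i k" "B k j = A j k" using a b by auto
    have "(A i j * A j k * A k i + A i k * A j i * A k j) - (B i j * B j k * B k i + B i k * B j i * B k j)
      = (2 * A j k - 1) * (A i j - A i k)" unfolding bv a by (simp add: algebra_simps)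
    then show ?thesis using eq by simp
  next
    case False
    then have "B i j = A j i" "B i k = A k i" "B j k = A j k" using r by (auto simp: R_def)
    then have bv: "B i j = 1 - A i j" "B i k = 1 - A i k" "B j k = A j k" "B j i = A i j"
      "B k i = A i k" "B k j = 1 - A j k" using a b by auto
    have "(A i j * A j k * A k i + A i k * A j i * A k j) - (B i j * B j k * B k i + B i k * B j i * B k j)
      = (2 * A j k - 1) * (A i j - A i k)" unfolding bv a by (simp add: algebra_simps)
    then show ?thesis using eq by simp
  qed
  then have "A j k = 1/2 \<or> A i j = A i k" by auto
  then show ?thesis using a by auto
qed

lemma KL1:
  assumes S: "S \<subseteq> {0..<n}" and m: "modeon e S" and v: "v < n" "v \<notin> S"
    and s: "s \<in> S" and t: "t \<in> S" and ns: "\<not> R e v s" and rt: "R e v t"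
  shows "A t v = A t s"
proof -
  have n: "s < n" "t < n" using S s t by auto
  have ts: "t \<noteq> s" using ns rt by blast
  have "R (\<not> e) v s \<and> A v s \<noteq> A s v" using notR[OF v(1) n(1) ns] .
  moreover have "R e t v" using R_sym[OF v(1) n(2) rt] .
  moreover have "R e t s" using m s t unfolding modeon_def by blast
  ultimately show ?thesis using apex[of t v s e] n v ts s t by force
qed

lemma modeon_insert:
  assumes "Y \<subseteq> {0..<n}" "v < n" "modeon e Y" "\<forall>s\<in>Y. R e v s"
  shows "modeon e (insert v Y)"
  unfolding modeon_def
proof (intro ballI)
  fix i j assume i: "i \<in> insert v Y" and j: "j \<in> insert v Y"
  have n: "i < n" "j < n" using i j assms(1,2) by auto
  show "R e i j"
  proof (cases "i = v")
    case True
    then show ?thesis using assms(4) j R_diag n by auto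
  next
    case False
    then have iY: "i \<in> Y" using i by blast
    show ?thesis
    proof (cases "j = v")
      case True
      then show ?thesis using R_sym[OF assms(2) n(1)] assms(4) iY by blast
    next
      case False
      then show ?thesis using assms(3) iY j unfolding modeon_def by blast
    qed
  qed
qed

lemma KLp:
  assumes Y: "Y \<subseteq> {0..<n}" and iY: "indec Y" and v: "v \<in> Y"
    and c2: "2 \<le> card (Y - {v})" and m: "modeon e (Y - {v})"
  shows "cons Y"
proof -
  let ?S = "Y - {v}"
  define D where "D = {s \<in> ?S. \<not> R e v s}"
  have vn: "v < n" using v Y by auto
  have S: "?S \<subseteq> {0..<n}" using Y by blast
  have finY: "finite Y" using Y finV by blast
  have "clanin Y (insert v D)" unfolding clanin_def
  proof (intro conjI ballI)
    show "insert v D \<subseteq> Y" using v by (auto simp: D_def)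
    fix i j k assume i: "i \<in> insert v D" and j: "j \<in> insert v D" and k: "k \<in> Y - insert v D"
    then have kS: "k \<in> ?S" and rk: "R e v k" by (auto simp: D_def)
    have "A k u = A k v" if "u \<in> insert v D" for u
    proof (cases "u = v")
      case False
      then have "u \<in> ?S" "\<not> R e v u" using that by (auto simp: D_def)
      then show ?thesis using KL1[OF S m vn _ _ kS] rk by force
    qed simp
    then show "A k i = A k j" using i j by metis
  qed
  then have "card (insert v D) \<le> 1 \<or> insert v D = Y" using iY unfolding indec_def by blast
  then show ?thesis
  proof
    assume c: "card (insert v D) \<le> 1"
    have "D = {}"
    proof (rule ccontr)
      assume "D \<noteq> {}"
      then obtain s where s: "s \<in> D" by blast
      then have "s \<noteq> v" by (auto simp: D_def)
      moreover have "finite (insert v D)" using finY v by (auto simp: D_def intro: finite_subset)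
      moreover have "{v,s} \<subseteq> insert v D" using s by blast
      ultimately have "2 \<le> card (insert v D)" by (metis card_2_iff card_mono)
      then show False using c by simp
    qed
    then have "\<forall>s\<in>?S. R e v s" by (auto simp: D_def)
    then have "modeon e (insert v ?S)" using modeon_insert[OF S vn m] by blast
    moreover have "insert v ?S = Y" using v by blast
    ultimately show ?thesis unfolding cons_def by auto
  next
    assume W: "insert v D = Y"
    have anti: "\<And>s. s \<in> ?S \<Longrightarrow> \<not> R e v s" using W by (auto simp: D_def)
    have "modeon (\<not> e) Y" unfolding modeon_def
    proof (intro ballI)
      fix i j assume i: "i \<in> Y" and j: "j \<in> Y"
      have n: "i < n" "j < n" using i j Y by auto
      have vs: "R (\<not> e) v s" if "s \<in> ?S" for s
        using notR[OF vn _ anti[OF that]] that Y by auto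
      have ss: "R (\<not> e) s s'" if s: "s \<in> ?S" and s': "s' \<in> ?S" for s s'
      proof (cases "A s s' = A s' s")
        case True
        then show ?thesis using R_neutral2 m s s' unfolding modeon_def by blast
      next
        case False
        have sn: "s < n" "s' < n" using s s' Y by auto
        have ss': "s \<noteq> s'" using False by auto
        have lev: "A v a = A v b" if "a \<in> ?S" "b \<in> ?S" "A a b \<noteq> A b a" for a b
        proof -
          have "a \<noteq> b" using that by auto
          moreover have "a < n" "b < n" using that Y by auto
          moreover have "R e a b" using m that unfolding modeon_def by blast
          ultimately have "A a b = A b a \<or> A v a = A v b"
            using apex[of v a b "\<not> e"] vn vs[OF that(1)] vs[OF that(2)] that by auto
          then show ?thesis using that by simp
        qed
        define C where "C = {c \<in> ?S. A v c = A v s}"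
        have "clanin Y C" unfolding clanin_def
        proof (intro conjI ballI)
          show "C \<subseteq> Y" by (auto simp: C_def)
          fix a b k assume a: "a \<in> C" and b: "b \<in> C" and k: "k \<in> Y - C"
          show "A k a = A k b"
          proof (cases "k = v")
            case True then show ?thesis using a b by (simp add: C_def)
          next
            case False
            then have kS: "k \<in> ?S" and kv: "A v k \<noteq> A v s" using k by (auto simp: C_def)
            have half: "A k c = 1/2" if c: "c \<in> C" for c
            proof -
              have cS: "c \<in> ?S" and cv: "A v c = A v s" using c by (auto simp: C_def)
              have "A k c = A c k"
              proof (rule ccontr)
                assume "A k c \<noteq> A c k"
                then have "A v k = A v c" using lev[OF kS cS] by blast
                then show False using kv cv by simp
              qed
              moreover have "k \<noteq> c" using k c by blast
              moreover have "k < n" "c < n" using kS cS Y by auto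
              ultimately show ?thesis using skew[of k c] by simp
            qed
            show ?thesis using half[OF a] half[OF b] by simp
          qed
        qed
        moreover have "2 \<le> card C"
        proof -
          have "{s,s'} \<subseteq> C" using s s' lev[OF s s' False] by (auto simp: C_def)
          moreover have "finite C" using finY by (auto simp: C_def intro: finite_subset)
          ultimately show ?thesis using ss' by (metis card_2_iff card_mono)
        qed
        ultimately have "C = Y" using indecD[OF iY] by blast
        then show ?thesis using v by (auto simp: C_def)
      qed
      show "R (\<not> e) i j"
      proof (cases "i = v")
        case True
        then show ?thesis
        proof (cases "j = v")
          case True then show ?thesis using \<open>i = v\<close> R_diag vn by simp
        next
          case False then show ?thesis using vs j \<open>i = v\<close> by blast
        qed
      next
        case False
        then have iS: "i \<in> ?S" using i by blast
        show ?thesis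
        proof (cases "j = v")
          case True then show ?thesis using R_sym[OF vn n(1) vs[OF iS]] by simp
        next
          case False then show ?thesis using ss iS j by blast
        qed
      qed
    qed
    then show ?thesis unfolding cons_def by blast
  qed
qed

end

context gts begin

lemma anti_ext:
  assumes X: "X \<subseteq> {0..<n}" and iX: "indec X" and c3: "3 \<le> card X" and m: "modeon e X"
    and v: "v < n" "v \<notin> X" and anti: "\<forall>s\<in>X. \<not> R e v s"
  shows "ext X v"
proof -
  have finX: "finite X" using X finV by blast
  have "X \<noteq> {}" using c3 by auto
  then obtain s0 where s0: "s0 \<in> X" by blast
  have vs: "R (\<not> e) v s" if "s \<in> X" for s
    using notR[OF v(1) _ anti[rule_format, OF that]] that X by auto
  have half: "A k c = 1/2" if k: "k \<in> X" and c: "c \<in> X" and kc: "A v k \<noteq> A v c" for k c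
  proof -
    have kc': "k \<noteq> c" using kc by auto
    have n: "k < n" "c < n" using k c X by auto
    have "A k c = A c k"
    proof (rule ccontr)
      assume "A k c \<noteq> A c k"
      moreover have "R e k c" using m k c unfolding modeon_def by blast
      ultimately have "A v k = A v c"
        using apex[of v k c "\<not> e"] v n kc' vs[OF k] vs[OF c] k c by auto
      then show False using kc by simp
    qed
    then show ?thesis using skew[of k c] n kc' by simp
  qed
  define C where "C = {c \<in> X. A v c = A v s0}"
  have "clanin X C" unfolding clanin_def
  proof (intro conjI ballI)
    show "C \<subseteq> X" by (auto simp: C_def)
    fix a b k assume a: "a \<in> C" and b: "b \<in> C" and k: "k \<in> X - C"
    have ka: "A v k \<noteq> A v a" "A v k \<noteq> A v b" using a b k by (auto simp: C_def)
    have "k \<in> X" "a \<in> X" "b \<in> X" using a b k by (auto simp: C_def)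
    then show "A k a = A k b" using half[of k a] half[of k b] ka by simp
  qed
  then have "card C \<le> 1 \<or> C = X" using iX unfolding indec_def by blast
  then show ?thesis
  proof
    assume CX: "C = X"
    show ?thesis unfolding ext_def
    proof (intro ballI)
      fix i j assume i: "i \<in> X" and j: "j \<in> X"
      then have "i \<in> C" "j \<in> C" using CX by blast+
      then have "A v i = A v s0" "A v j = A v s0" unfolding C_def by blast+
      then show "A v i = A v j" by simp
    qed
  next
    assume c1: "card C \<le> 1"
    have s0C: "s0 \<in> C" using s0 by (simp add: C_def)
    have finC: "finite C" using finX by (auto simp: C_def)
    have Cs0: "C = {s0}"
    proof -
      have "\<forall>a\<in>C. \<forall>b\<in>C. a = b" using c1 finC card_le_Suc0_iff_eq by auto
      then show ?thesis using s0C by blast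
    qed
    have "clanin X (X - {s0})" unfolding clanin_def
    proof (intro conjI ballI)
      show "X - {s0} \<subseteq> X" by blast
      fix a b k assume a: "a \<in> X - {s0}" and b: "b \<in> X - {s0}" and k: "k \<in> X - (X - {s0})"
      then have ks: "k = s0" by blast
      have h: "A s0 u = 1/2" if u: "u \<in> X - {s0}" for u
      proof -
        have "u \<notin> C" using u Cs0 by blast
        then have "A v u \<noteq> A v s0" using u by (auto simp: C_def)
        then have "A u s0 = 1/2" using half u s0 by blast
        moreover have "u < n" "s0 < n" "u \<noteq> s0" using u s0 X by auto
        ultimately show ?thesis using skew[of u s0] by simp
      qed
      show "A k a = A k b" using h[OF a] h[OF b] ks by simp
    qed
    moreover have "2 \<le> card (X - {s0})" using c3 s0 finX by simp
    ultimately have "X - {s0} = X" using indecD[OF iX] by blast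
    then show ?thesis using s0 by blast
  qed
qed

lemma trich:
  assumes X: "X \<subseteq> {0..<n}" and iX: "indec X" and c3: "3 \<le> card X" and m: "modeon e X"
    and v: "v < n" "v \<notin> X"
  shows "(\<forall>s\<in>X. R e v s) \<or> (\<exists>s\<in>X. twin X s v \<and> \<not> R e v s \<and> (\<forall>w\<in>X-{s}. R e v w))
      \<or> (ext X v \<and> (\<forall>s\<in>X. \<not> R e v s))"
proof -
  have finX: "finite X" using X finV by blast
  define D where "D = {s \<in> X. \<not> R e v s}"
  have "clanin X D" unfolding clanin_def
  proof (intro conjI ballI)
    show "D \<subseteq> X" by (auto simp: D_def)
    fix i j k assume i: "i \<in> D" and j: "j \<in> D" and k: "k \<in> X - D"
    then have "k \<in> X" "R e v k" by (auto simp: D_def)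
    then have "A k v = A k i" "A k v = A k j"
      using KL1[OF X m v, of i k] KL1[OF X m v, of j k] i j by (auto simp: D_def)
    then show "A k i = A k j" by simp
  qed
  then have "card D \<le> 1 \<or> D = X" using iX unfolding indec_def by blast
  then show ?thesis
  proof
    assume "D = X"
    then have "\<forall>s\<in>X. \<not> R e v s" by (auto simp: D_def)
    then show ?thesis using anti_ext[OF X iX c3 m v] by blast
  next
    assume c1: "card D \<le> 1"
    show ?thesis
    proof (cases "D = {}")
      case True
      then show ?thesis by (auto simp: D_def)
    next
      case False
      then obtain s where sD: "s \<in> D" by blast
      have finD: "finite D" using finX by (auto simp: D_def)
      have uD: "\<And>w. w \<in> D \<Longrightarrow> w = s" using c1 finD card_le_Suc0_iff_eq sD by fastforce
      have sX: "s \<in> X" and ns: "\<not> R e v s" using sD by (auto simp: D_def)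
      have rw: "\<forall>w\<in>X-{s}. R e v w" using uD by (auto simp: D_def)
      have "twin X s v" unfolding twin_def
      proof
        fix w assume w: "w \<in> X - {s}"
        then have "R e v w" using rw by blast
        then show "A w s = A w v" using KL1[OF X m v sX, of w] w ns by auto
      qed
      then show ?thesis using sX ns rw by blast
    qed
  qed
qed

lemma L5half:
  assumes X: "X \<subseteq> {0..<n}" and iX: "indec X" and c3: "3 \<le> card X" and m: "modeon e X"
    and x: "x \<in> {0..<n} - X" and y: "y \<in> {0..<n} - X" and xy: "x \<noteq> y"
    and iZ: "indec (insert x (insert y X))"
    and s: "s \<in> X" and tsx: "twin X s x" and nxs: "\<not> R e x s" and rx: "\<forall>w\<in>X-{s}. R e x w"
    and ny: "\<not> (\<forall>s\<in>X. R e y s)"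
  shows False
proof -
  let ?Z = "insert x (insert y X)"
  let ?X1 = "insert x (X - {s})"
  have finX: "finite X" using X finV by blast
  have xn: "x < n" "x \<notin> X" and yn: "y < n" "y \<notin> X" using x y by auto
  have sn: "s < n" using s X by auto
  have X1: "?X1 \<subseteq> {0..<n}" using X xn by auto
  have iX1: "indec ?X1" using twin_swap[OF X s xn tsx iX] .
  have cX1: "card ?X1 = card X" using finX s xn c3 by (simp add: card_insert_if)
  have mX1: "modeon e ?X1"
    using modeon_insert[of "X - {s}" x e] X xn(1) m rx unfolding modeon_def by blast
  have yX1: "y \<notin> ?X1" using yn xy by blast
  have c2: "2 \<le> card (X - {s})" using c3 s finX by simp
  have "\<not> (\<forall>a\<in>X-{s}. \<forall>b\<in>X-{s}. a = b)"
    using c2 card_le_Suc0_iff_eq[of "X - {s}"] finX by auto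
  then obtain w1 w2 where w12: "w1 \<in> X - {s}" "w2 \<in> X - {s}" "w1 \<noteq> w2" by blast
  have tX1: "(\<forall>u\<in>?X1. R e y u) \<or> (\<exists>u\<in>?X1. twin ?X1 u y \<and> \<not> R e y u \<and> (\<forall>w\<in>?X1-{u}. R e y w))
      \<or> (ext ?X1 y \<and> (\<forall>u\<in>?X1. \<not> R e y u))"
    using trich[OF X1 iX1 _ mX1 yn(1) yX1] cX1 c3 by simp
  have tX: "(\<forall>u\<in>X. R e y u) \<or> (\<exists>u\<in>X. twin X u y \<and> \<not> R e y u \<and> (\<forall>w\<in>X-{u}. R e y w))
      \<or> (ext X y \<and> (\<forall>u\<in>X. \<not> R e y u))"
    using trich[OF X iX c3 m yn] .
  then consider (b) s' where "s' \<in> X" "twin X s' y" "\<not> R e y s'" "\<forall>w\<in>X-{s'}. R e y w"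
    | (c) "ext X y" "\<forall>u\<in>X. \<not> R e y u"
    using ny by blast
  then show False
  proof cases
    case b
    show False
    proof (cases "s' = s")
      case True
      have "clanin ?Z {s,x,y}" unfolding clanin_def
      proof (intro conjI ballI)
        show "{s,x,y} \<subseteq> ?Z" using s by blast
        fix i j k assume i: "i \<in> {s,x,y}" and j: "j \<in> {s,x,y}" and k: "k \<in> ?Z - {s,x,y}"
        then have kX: "k \<in> X - {s}" by blast
        have "A k s = A k x" "A k s = A k y" using tsx b(2) True kX unfolding twin_def by blast+
        then show "A k i = A k j" using i j by auto
      qed
      moreover have "2 \<le> card {s,x,y}"
      proof -
        have "s \<noteq> x" using s xn by blast
        then have "card {s,x} = 2" by simp
        moreover have "card {s,x} \<le> card {s,x,y}" by (rule card_mono) auto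
        ultimately show ?thesis by simp
      qed
      ultimately have "{s,x,y} = ?Z" using indecD[OF iZ] by blast
      then have "w1 \<in> {s,x,y}" using w12 by blast
      then show False using w12 xn yn by blast
    next
      case False
      have ys: "R e y s" using b(4) s False by blast
      have sx_ne: "A y s \<noteq> A y x"
      proof
        assume eqy: "A y s = A y x"
        have "clanin ?Z {s,x}" unfolding clanin_def
        proof (intro conjI ballI)
          show "{s,x} \<subseteq> ?Z" using s by blast
          fix i j k assume i: "i \<in> {s,x}" and j: "j \<in> {s,x}" and k: "k \<in> ?Z - {s,x}"
          have "A k s = A k x"
          proof (cases "k = y")
            case True then show ?thesis using eqy by simp
          next
            case False then have "k \<in> X - {s}" using k by blast
            then show ?thesis using tsx unfolding twin_def by blast
          qed
          then show "A k i = A k j" using i j by auto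
        qed
        moreover have "2 \<le> card {s,x}"
        proof -
          have "s \<noteq> x" using s xn by blast
          then show ?thesis by simp
        qed
        ultimately have "{s,x} = ?Z" using indecD[OF iZ] by blast
        then have "y \<in> {s,x}" by blast
        then show False using yn xy s by auto
      qed
      have nyx: "\<not> R e y x"
      proof
        assume ryx: "R e y x"
        have "R (\<not> e) x s \<and> A x s \<noteq> A s x" using notR[OF xn(1) sn nxs] .
        then have rsx: "R (\<not> e) s x" and sx: "A s x \<noteq> A x s" using R_sym[OF xn(1) sn] by auto
        have "y \<noteq> s" "s \<noteq> x" using yn xn s by blast+
        then have "A s x = A x s \<or> A y s = A y x" using apex[of y s x e] yn(1) sn xn(1) xy ys ryx rsx by auto
        then show False using sx sx_ne by blast
      qed
      have s'X1: "s' \<in> ?X1" using b(1) False by blast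
      have s'x: "s' \<noteq> x" using b(1) xn by blast
      have "\<not> X \<subseteq> {s,s'}"
      proof
        assume "X \<subseteq> {s,s'}"
        then have "card X \<le> card {s,s'}" by (rule card_mono[rotated]) simp
        moreover have "card {s,s'} \<le> 2" by (cases "s = s'") auto
        ultimately show False using c3 by simp
      qed
      then obtain w where w: "w \<in> X" "w \<noteq> s" "w \<noteq> s'" by blast
      from tX1 show False
      proof (elim disjE)
        assume "\<forall>u\<in>?X1. R e y u"
        then show False using nyx by blast
      next
        assume "\<exists>u\<in>?X1. twin ?X1 u y \<and> \<not> R e y u \<and> (\<forall>w\<in>?X1-{u}. R e y w)"
        then obtain u where u: "u \<in> ?X1" "\<forall>w\<in>?X1-{u}. R e y w" by blast
        show False
        proof (cases "u = x")
          case True then show False using u s'X1 s'x b(3) by blast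
        next
          case False then show False using u nyx by blast
        qed
      next
        assume "ext ?X1 y \<and> (\<forall>u\<in>?X1. \<not> R e y u)"
        moreover have "w \<in> ?X1" using w by blast
        ultimately show False using b(4) w by blast
      qed
    qed
  next
    case c
    from tX1 show False
    proof (elim disjE)
      assume "\<forall>u\<in>?X1. R e y u"
      then show False using c(2) w12 by blast
    next
      assume "\<exists>u\<in>?X1. twin ?X1 u y \<and> \<not> R e y u \<and> (\<forall>w\<in>?X1-{u}. R e y w)"
      then obtain u where u: "u \<in> ?X1" "\<forall>w\<in>?X1-{u}. R e y w" by blast
      have "w1 \<in> ?X1" "w2 \<in> ?X1" using w12 by blast+
      then show False using u c(2) w12 by blast
    next
      assume e1: "ext ?X1 y \<and> (\<forall>u\<in>?X1. \<not> R e y u)"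
      have "clanin ?Z (insert x X)" unfolding clanin_def
      proof (intro conjI ballI)
        show "insert x X \<subseteq> ?Z" by blast
        fix i j k assume i: "i \<in> insert x X" and j: "j \<in> insert x X" and k: "k \<in> ?Z - insert x X"
        then have ky: "k = y" by blast
        have w1X1: "w1 \<in> ?X1" "x \<in> ?X1" using w12 by blast+
        have hx: "A y x = A y w1" using e1 w1X1 unfolding ext_def by blast
        have hX: "\<And>u. u \<in> X \<Longrightarrow> A y u = A y w1" using c(1) w12 unfolding ext_def by blast
        have "A y i = A y w1" "A y j = A y w1" using i j hx hX by auto
        then show "A k i = A k j" using ky by simp
      qed
      moreover have "2 \<le> card (insert x X)"
      proof -
        have "card (insert x X) = Suc (card X)" using finX xn by simp
        then show ?thesis using c3 by simp
      qed
      ultimately have "insert x X = ?Z" using indecD[OF iZ] by blast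
      then have "y \<in> insert x X" by blast
      then show False using yn xy by auto
    qed
  qed
qed

end

context gts begin

lemma L5:
  assumes X: "X \<subseteq> {0..<n}" and iX: "indec X" and c3: "3 \<le> card X" and m: "modeon e X"
    and x: "x \<in> {0..<n} - X" and y: "y \<in> {0..<n} - X" and xy: "x \<noteq> y"
    and iZ: "indec (insert x (insert y X))"
  shows "cons (insert x (insert y X))"
proof -
  let ?Z = "insert x (insert y X)"
  have finX: "finite X" using X finV by blast
  have xn: "x < n" "x \<notin> X" and yn: "y < n" "y \<notin> X" using x y by auto
  have Z: "?Z \<subseteq> {0..<n}" using X x y by auto
  have tx: "(\<forall>u\<in>X. R e x u) \<or> (\<exists>u\<in>X. twin X u x \<and> \<not> R e x u \<and> (\<forall>w\<in>X-{u}. R e x w))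
      \<or> (ext X x \<and> (\<forall>u\<in>X. \<not> R e x u))"
    using trich[OF X iX c3 m xn] .
  have ty: "(\<forall>u\<in>X. R e y u) \<or> (\<exists>u\<in>X. twin X u y \<and> \<not> R e y u \<and> (\<forall>w\<in>X-{u}. R e y w))
      \<or> (ext X y \<and> (\<forall>u\<in>X. \<not> R e y u))"
    using trich[OF X iX c3 m yn] .
  show ?thesis
  proof (cases "\<forall>s\<in>X. R e x s")
    case True
    have "modeon e (insert x X)" using modeon_insert[OF X xn(1) m True] .
    moreover have "?Z - {y} = insert x X" using yn xy by auto
    moreover have "2 \<le> card (insert x X)" using finX xn c3 by simp
    moreover have "y \<in> ?Z" by blast
    ultimately show ?thesis using KLp[OF Z iZ, of y e] by simp
  next
    case nx: False
    show ?thesis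
    proof (cases "\<forall>s\<in>X. R e y s")
      case True
      have "modeon e (insert y X)" using modeon_insert[OF X yn(1) m True] .
      moreover have "?Z - {x} = insert y X" using xn xy by auto
      moreover have "2 \<le> card (insert y X)" using finX yn c3 by simp
      moreover have "x \<in> ?Z" by blast
      ultimately show ?thesis using KLp[OF Z iZ, of x e] by simp
    next
      case ny: False
      from tx consider (b) s where "s \<in> X" "twin X s x" "\<not> R e x s" "\<forall>w\<in>X-{s}. R e x w"
        | (c) "ext X x" "\<forall>u\<in>X. \<not> R e x u"
        using nx by blast
      then show ?thesis
      proof cases
        case b
        then show ?thesis using L5half[OF X iX c3 m x y xy iZ b(1-4) ny] by blast
      next
        case c
        from ty consider (b') s where "s \<in> X" "twin X s y" "\<not> R e y s" "\<forall>w\<in>X-{s}. R e y w"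
          | (c') "ext X y" "\<forall>u\<in>X. \<not> R e y u"
          using ny by blast
        then show ?thesis
        proof cases
          case b'
          have iZ': "indec (insert y (insert x X))" using iZ by (simp add: insert_commute)
          show ?thesis using L5half[OF X iX c3 m y x xy[symmetric] iZ' b'(1-4) nx] by blast
        next
          case c'
          have "clanin ?Z X" unfolding clanin_def
          proof (intro conjI ballI)
            show "X \<subseteq> ?Z" by blast
            fix i j k assume i: "i \<in> X" and j: "j \<in> X" and k: "k \<in> ?Z - X"
            then have "k = x \<or> k = y" by blast
            then show "A k i = A k j" using c(1) c'(1) i j unfolding ext_def by blast
          qed
          moreover have "2 \<le> card X" using c3 by simp
          ultimately have "X = ?Z" using indecD[OF iZ] by blast
          then show ?thesis using xn by blast
        qed
      qed
    qed
  qed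
qed

lemma MI:
  assumes iV: "indec {0..<n}"
  shows "X \<subseteq> {0..<n} \<Longrightarrow> indec X \<Longrightarrow> 3 \<le> card X \<Longrightarrow> cons X \<Longrightarrow> cons {0..<n}"
proof (induction "card ({0..<n} - X)" arbitrary: X rule: less_induct)
  case less
  have X: "X \<subseteq> {0..<n}" and iX: "indec X" and c3: "3 \<le> card X" and cX: "cons X"
    using less.prems by auto
  obtain e where m: "modeon e X" using cX unfolding cons_def by blast
  have finX: "finite X" using X finV by blast
  show ?case
  proof (cases "X = {0..<n}")
    case True then show ?thesis using cX by simp
  next
    case XV: False
    show ?thesis
    proof (cases "\<exists>v\<in>{0..<n} - X. indec (insert v X)")
      case True
      then obtain v where v: "v \<in> {0..<n} - X" "indec (insert v X)" by blast
      have Y: "insert v X \<subseteq> {0..<n}" using X v by auto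
      have "insert v X - {v} = X" using v by auto
      then have cY: "cons (insert v X)" using KLp[OF Y v(2), of v e] m c3 by auto
      have "{0..<n} - insert v X \<subset> {0..<n} - X" using v by blast
      then have "card ({0..<n} - insert v X) < card ({0..<n} - X)"
        by (intro psubset_card_mono) simp_all
      moreover have "3 \<le> card (insert v X)" using c3 finX v by simp
      ultimately show ?thesis using less.hyps[of "insert v X"] Y v(2) cY by blast
    next
      case False
      then have none: "\<forall>v\<in>{0..<n} - X. \<not> indec (insert v X)" by blast
      obtain z y where zy: "z \<in> {0..<n} - X" "y \<in> {0..<n} - X" "z \<noteq> y" "indec (insert z (insert y X))"
        using ERL[OF iV X iX c3 XV none] by blast
      have cY: "cons (insert z (insert y X))" using L5[OF X iX c3 m zy(1) zy(2) zy(3) zy(4)] .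
      have Y: "insert z (insert y X) \<subseteq> {0..<n}" using X zy by auto
      have "{0..<n} - insert z (insert y X) \<subset> {0..<n} - X" using zy by blast
      then have "card ({0..<n} - insert z (insert y X)) < card ({0..<n} - X)"
        by (intro psubset_card_mono) simp_all
      moreover have "3 \<le> card (insert z (insert y X))"
      proof -
        have "card X \<le> card (insert z (insert y X))" using finX by (intro card_mono) auto
        then show ?thesis using c3 by simp
      qed
      ultimately show ?thesis using less.hyps[of "insert z (insert y X)"] Y zy(4) cY by blast
    qed
  qed
qed

lemma Rsym_eq: "i < n \<Longrightarrow> j < n \<Longrightarrow> R e i j = R e j i"
  using R_sym by blast

lemma Rm: "i < n \<Longrightarrow> j < n \<Longrightarrow> A i j \<noteq> A j i \<Longrightarrow> R e i j = (R True i j = e)"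
  using R2[of i j True] R_neutral[of True i j] by (cases e) auto

lemma modeon_tri:
  assumes "i < n" "j < n" "k < n" "R e i j" "R e i k" "R e j k"
  shows "modeon e {i,j,k}"
  unfolding modeon_def using assms R_diag Rsym_eq by auto

lemma tri_strict:
  assumes n: "i < n" "j < n" "k < n" and d: "i \<noteq> j" "i \<noteq> k" "j \<noteq> k"
    and nc: "\<not> cons {i,j,k}"
  shows "A i j \<noteq> A j i"
proof
  assume ij: "A i j = A j i"
  have rij: "R e i j" for e using R2[OF n(1,2), of True] R_neutral2[OF ij] by blast
  have half: "A i j = 1/2" using ij skew[of i j] n d by simp
  have n1: "\<not> (R True i k \<and> R True j k)" using nc modeon_tri[OF n, of True] rij unfolding cons_def by blast
  have n2: "\<not> (R False i k \<and> R False j k)" using nc modeon_tri[OF n, of False] rij unfolding cons_def by blast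
  have "(R True i k \<and> \<not> R True j k) \<or> (\<not> R True i k \<and> R True j k)" using n1 n2 R2[OF n(1,3), of True] R2[OF n(2,3), of True] by auto
  then show False
  proof
    assume h: "R True i k \<and> \<not> R True j k"
    then have "R False j k \<and> A j k \<noteq> A k j" using notR[OF n(2,3), of True] by auto
    moreover have "\<not> R False i k" using n2 calculation by blast
    ultimately have "A i j = A i k" using apex[of i j k True] n d rij h by auto
    then have "A i k = A k i" using half skew[of i k] n d by simp
    then have "R False i k" using R_neutral2 h by blast
    then show False using \<open>\<not> R False i k\<close> by blast
  next
    assume h: "\<not> R True i k \<and> R True j k"
    then have "R False i k \<and> A i k \<noteq> A k i" using notR[OF n(1,3), of True] by auto
    moreover have "\<not> R False j k" using n2 calculation by blast
    moreover have "R True j i" using rij Rsym_eq n by blast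
    ultimately have "A j i = A j k" using apex[of j i k True] n d h by auto
    then have "A j k = A k j" using half ij skew[of j k] n d by simp
    then have "R False j k" using R_neutral2 h by blast
    then show False using \<open>\<not> R False j k\<close> by blast
  qed
qed

lemma tri_mixed:
  assumes n: "i < n" "j < n" "k < n" and nc: "\<not> cons {i,j,k}"
  shows "\<not> (R True i j = R True i k \<and> R True i k = R True j k)"
proof
  assume h: "R True i j = R True i k \<and> R True i k = R True j k"
  show False
  proof (cases "R True i j")
    case True
    then have "modeon True {i,j,k}" using h modeon_tri[OF n] by simp
    then show False using nc unfolding cons_def by blast
  next
    case False
    then have "R False i j" "R False i k" "R False j k"
      using h R2[OF n(1,2), of True] R2[OF n(1,3), of True] R2[OF n(2,3), of True] by auto
    then have "modeon False {i,j,k}" using modeon_tri[OF n] by simp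
    then show False using nc unfolding cons_def by blast
  qed
qed

end

context gts begin

lemma P4core:
  assumes n: "p1 < n" "p2 < n" "p3 < n" "p4 < n" and d: "distinct [p1,p2,p3,p4]"
    and st: "A p1 p3 \<noteq> A p3 p1" "A p1 p2 \<noteq> A p2 p1" "A p2 p4 \<noteq> A p4 p2" "A p3 p4 \<noteq> A p4 p3"
    and r: "R e p1 p2" "R e p2 p3" "R e p3 p4" "R (\<not> e) p1 p3" "R (\<not> e) p2 p4" "R (\<not> e) p1 p4"
  shows "\<not> indec {p1,p2,p3,p4}"
proof
  assume iQ: "indec {p1,p2,p3,p4}"
  have dd: "p1 \<noteq> p2" "p1 \<noteq> p3" "p1 \<noteq> p4" "p2 \<noteq> p3" "p2 \<noteq> p4" "p3 \<noteq> p4" using d by auto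
  have e1: "A p2 p1 = A p2 p3"
    using apex[of p2 p1 p3 e] n dd R_sym[OF n(1,2) r(1)] r(2) r(4) st(1) by auto
  have e2: "A p3 p2 = A p3 p4"
    using apex[of p3 p2 p4 e] n dd R_sym[OF n(2,3) r(2)] r(3) r(5) st(3) by auto
  have e3: "A p4 p1 = A p4 p2"
    using apex[of p4 p1 p2 "\<not> e"] n dd R_sym[OF n(1,4) r(6)] R_sym[OF n(2,4) r(5)] r(1) st(2) by auto
  have e4: "A p1 p3 = A p1 p4"
    using apex[of p1 p3 p4 "\<not> e"] n dd r(4) r(6) r(3) st(4) by auto
  define a where "a = A p1 p2"
  define b where "b = A p1 p3"
  have v1: "A p1 p2 = a" "A p1 p3 = b" by (simp_all add: a_def b_def)
  have v2: "A p2 p1 = 1 - a" using skew[of p1 p2] n dd v1 by simp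
  have v3: "A p2 p3 = 1 - a" using e1 v2 by simp
  have v4: "A p3 p2 = a" using skew[of p2 p3] n dd v3 by simp
  have v5: "A p3 p4 = a" using e2 v4 by simp
  have v6: "A p4 p3 = 1 - a" using skew[of p3 p4] n dd v5 by simp
  have v7: "A p3 p1 = 1 - b" using skew[of p1 p3] n dd v1 by simp
  have v8: "A p1 p4 = b" using e4 v1 by simp
  have v9: "A p4 p1 = 1 - b" using skew[of p1 p4] n dd v8 by simp
  have v10: "A p4 p2 = 1 - b" using e3 v9 by simp
  have v11: "A p2 p4 = b" using skew[of p4 p2] n dd v10 by simp
  have v0: "A p1 p1 = 0" "A p2 p2 = 0" "A p3 p3 = 0" "A p4 p4 = 0" using diag n by auto
  have w0: "B p1 p1 = 0" "B p2 p2 = 0" "B p3 p3 = 0" "B p4 p4 = 0" using diagB n by auto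
  note vA = v1 v2 v3 v4 v5 v6 v7 v8 v9 v10 v11 v0
  have skB: "B j i = 1 - B i j" if "i \<in> {p1,p2,p3,p4}" "j \<in> {p1,p2,p3,p4}" "i \<noteq> j" for i j
    using skewB that n by auto
  have eqm: "principal_minor A {p1,p2,p3,p4} = principal_minor B {p1,p2,p3,p4}" using minors n by auto
  have poly: "(2*a - 1) * (2*b - 1) * (a - b) * (a + b - 1) = 0"
  proof (cases e)
    case True
    have u: "B p1 p2 = a" "B p2 p3 = 1 - a" "B p3 p4 = a" "B p1 p3 = 1 - b" "B p2 p4 = 1 - b" "B p1 p4 = 1 - b"
      using r True vA by (auto simp: R_def)
    have u2: "B p2 p1 = 1 - a" "B p3 p2 = a" "B p4 p3 = 1 - a" "B p3 p1 = b" "B p4 p2 = b" "B p4 p1 = b"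
      using skB[of p1 p2] skB[of p2 p3] skB[of p3 p4] skB[of p1 p3] skB[of p2 p4] skB[of p1 p4] dd u by auto
    have "principal_minor A {p1,p2,p3,p4} - principal_minor B {p1,p2,p3,p4}
        = - ((2*a - 1) * (2*b - 1) * (a - b) * (a + b - 1))"
      unfolding pm4[OF d] vA w0 u u2 by (simp add: algebra_simps)
    then show ?thesis using eqm by simp
  next
    case False
    have u: "B p1 p2 = 1 - a" "B p2 p3 = a" "B p3 p4 = 1 - a" "B p1 p3 = b" "B p2 p4 = b" "B p1 p4 = b"
      using r False vA by (auto simp: R_def)
    have u2: "B p2 p1 = a" "B p3 p2 = 1 - a" "B p4 p3 = a" "B p3 p1 = 1 - b" "B p4 p2 = 1 - b" "B p4 p1 = 1 - b"
      using skB[of p1 p2] skB[of p2 p3] skB[of p3 p4] skB[of p1 p3] skB[of p2 p4] skB[of p1 p4] dd u by auto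
    have "principal_minor A {p1,p2,p3,p4} - principal_minor B {p1,p2,p3,p4}
        = - ((2*a - 1) * (2*b - 1) * (a - b) * (a + b - 1))"
      unfolding pm4[OF d] vA w0 u u2 by (simp add: algebra_simps)
    then show ?thesis using eqm by simp
  qed
  have an: "2*a - 1 \<noteq> 0" using st(2) v1 v2 by auto
  have bn: "2*b - 1 \<noteq> 0" using st(1) v1 v7 by auto
  have "a = b \<or> a + b = 1" using poly an bn by auto
  then show False
  proof
    assume ab: "a = b"
    have "clanin {p1,p2,p3,p4} {p2,p3}" unfolding clanin_def
    proof (intro conjI ballI)
      show "{p2,p3} \<subseteq> {p1,p2,p3,p4}" by blast
      fix i j k assume i: "i \<in> {p2,p3}" and j: "j \<in> {p2,p3}" and k: "k \<in> {p1,p2,p3,p4} - {p2,p3}"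
      then have "k = p1 \<or> k = p4" by blast
      then have "A k p2 = A k p3" using vA ab by auto
      then show "A k i = A k j" using i j by auto
    qed
    then have "{p2,p3} = {p1,p2,p3,p4}" using indecD[OF iQ] dd by simp
    then show False using dd by (metis insertCI insertE singletonD)
  next
    assume ab: "a + b = 1"
    have "clanin {p1,p2,p3,p4} {p3,p4}" unfolding clanin_def
    proof (intro conjI ballI)
      show "{p3,p4} \<subseteq> {p1,p2,p3,p4}" by blast
      fix i j k assume i: "i \<in> {p3,p4}" and j: "j \<in> {p3,p4}" and k: "k \<in> {p1,p2,p3,p4} - {p3,p4}"
      then have "k = p1 \<or> k = p2" by blast
      then have "A k p3 = A k p4" using vA ab by auto
      then show "A k i = A k j" using i j by auto
    qed
    then have "{p3,p4} = {p1,p2,p3,p4}" using indecD[OF iQ] dd by simp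
    then show False using dd by (metis insertCI insertE singletonD)
  qed
qed

end

context gts begin

lemma core_at_a:
  assumes n: "a < n" "b < n" "c < n" "d < n" and dist: "distinct [a,b,c,d]"
    and st: "A a b \<noteq> A b a" "A a c \<noteq> A c a" "A a d \<noteq> A d a" "A b c \<noteq> A c b"
      "A b d \<noteq> A d b" "A c d \<noteq> A d c"
    and m: "R True a b = e" "R True a c = e" "R True a d = (\<not> e)" "R True b c = (\<not> e)"
      "\<not> (R True b d = (\<not> e) \<and> R True c d = (\<not> e))"
  shows "\<not> indec {a,b,c,d}"
proof -
  have dd: "a \<noteq> b" "a \<noteq> c" "a \<noteq> d" "b \<noteq> c" "b \<noteq> d" "c \<noteq> d" using dist by auto
  have rab: "R e a b" using Rm[OF n(1,2) st(1), of e] m(1) by simp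
  have rac: "R e a c" using Rm[OF n(1,3) st(2), of e] m(2) by simp
  have rad: "R (\<not> e) a d" using Rm[OF n(1,4) st(3), of "\<not> e"] m(3) by simp
  have rbc: "R (\<not> e) b c" using Rm[OF n(2,3) st(4), of "\<not> e"] m(4) by simp
  consider (C4) "R True b d = e" "R True c d = e" | (P1) "R True b d = e" "R True c d = (\<not> e)"
    | (P2) "R True b d = (\<not> e)" "R True c d = e"
    using m(5) by auto
  then show ?thesis
  proof cases
    case C4
    have rbd: "R e b d" using Rm[OF n(2,4) st(5), of e] C4(1) by simp
    have rcd: "R e c d" using Rm[OF n(3,4) st(6), of e] C4(2) by simp
    have h1: "A b a = A b d" using apex[of b a d e] n dd R_sym[OF n(1,2) rab] rbd rad st(3) by auto
    have h2: "A c a = A c d" using apex[of c a d e] n dd R_sym[OF n(1,3) rac] rcd rad st(3) by auto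
    show ?thesis
    proof
      assume iQ: "indec {a,b,c,d}"
      have "clanin {a,b,c,d} {a,d}" unfolding clanin_def
      proof (intro conjI ballI)
        show "{a,d} \<subseteq> {a,b,c,d}" by blast
        fix i j k assume i: "i \<in> {a,d}" and j: "j \<in> {a,d}" and k: "k \<in> {a,b,c,d} - {a,d}"
        then have "k = b \<or> k = c" by blast
        then have "A k a = A k d" using h1 h2 by auto
        then show "A k i = A k j" using i j by auto
      qed
      then have "{a,d} = {a,b,c,d}" using indecD[OF iQ] dd by simp
      then show False using dd by (metis insertCI insertE singletonD)
    qed
  next
    case P1
    have rbd: "R e b d" using Rm[OF n(2,4) st(5), of e] P1(1) by simp
    have rcd: "R (\<not> e) c d" using Rm[OF n(3,4) st(6), of "\<not> e"] P1(2) by simp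
    have "\<not> indec {c,a,b,d}"
      by (rule P4core[of c a b d e]) (use n dist st rab rbd rcd rad R_sym[OF n(1,3) rac] R_sym[OF n(2,3) rbc] in auto)
    moreover have "{c,a,b,d} = {a,b,c,d}" by auto
    ultimately show ?thesis by simp
  next
    case P2
    have rbd: "R (\<not> e) b d" using Rm[OF n(2,4) st(5), of "\<not> e"] P2(1) by simp
    have rcd: "R e c d" using Rm[OF n(3,4) st(6), of e] P2(2) by simp
    have "\<not> indec {b,a,c,d}"
      by (rule P4core[of b a c d e]) (use n dist st rac rcd rad rbc rbd R_sym[OF n(1,2) rab] in auto)
    moreover have "{b,a,c,d} = {a,b,c,d}" by auto
    ultimately show ?thesis by simp
  qed
qed

lemma L4:
  assumes Q: "Q \<subseteq> {0..<n}" and c4: "card Q = 4" and iQ: "indec Q"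
  shows "cons Q"
proof (rule ccontr)
  assume nc: "\<not> cons Q"
  have "Q \<noteq> {}" using c4 by auto
  then obtain a where aQ: "a \<in> Q" by blast
  have finQ: "finite Q" using Q finV by blast
  have "card (Q - {a}) = 3" using c4 aQ finQ by simp
  then have "\<exists>b c d. Q - {a} = {b,c,d} \<and> b \<noteq> c \<and> c \<noteq> d \<and> b \<noteq> d"
    unfolding card_3_iff by metis
  then obtain b c d where bcd: "Q - {a} = {b,c,d}" "b \<noteq> c" "c \<noteq> d" "b \<noteq> d"
    by blast
  have Qe: "Q = {a,b,c,d}" using bcd aQ by blast
  have dist: "distinct [a,b,c,d]" using bcd by auto
  have n: "a < n" "b < n" "c < n" "d < n" using Q Qe by auto
  have kl: "\<not> cons (Q - {x})" if x: "x \<in> Q" for x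
  proof
    assume "cons (Q - {x})"
    then obtain e where "modeon e (Q - {x})" unfolding cons_def by blast
    moreover have "2 \<le> card (Q - {x})" using c4 x finQ by simp
    ultimately have "cons Q" using KLp[OF Q iQ x] by blast
    then show False using nc by blast
  qed
  have qs: "Q - {a} = {b,c,d}" "Q - {b} = {a,c,d}" "Q - {c} = {a,b,d}" "Q - {d} = {a,b,c}"
    using Qe dist by auto
  have inQ: "a \<in> Q" "b \<in> Q" "c \<in> Q" "d \<in> Q" using Qe by auto
  have nt: "\<not> cons {b,c,d}" "\<not> cons {a,c,d}" "\<not> cons {a,b,d}" "\<not> cons {a,b,c}"
    using kl[OF inQ(1)] kl[OF inQ(2)] kl[OF inQ(3)] kl[OF inQ(4)] qs by simp_all
  have e1: "{a,d,b} = {a,b,d}" "{b,d,a} = {a,b,d}" "{c,d,a} = {a,c,d}" by auto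
  have dd: "a \<noteq> b" "a \<noteq> c" "a \<noteq> d" "b \<noteq> c" "b \<noteq> d" "c \<noteq> d" using dist by auto
  have sab: "A a b \<noteq> A b a" using tri_strict[of a b c] n dd nt(4) by auto
  have sac: "A a c \<noteq> A c a" using tri_strict[of a c d] n dd nt(2) by auto
  have sad: "A a d \<noteq> A d a" using tri_strict[of a d b] n dd nt(3) e1 by auto
  have sbc: "A b c \<noteq> A c b" using tri_strict[of b c d] n dd nt(1) by auto
  have sbd: "A b d \<noteq> A d b" using tri_strict[of b d a] n dd nt(3) e1 by auto
  have scd: "A c d \<noteq> A d c" using tri_strict[of c d a] n dd nt(2) e1 by auto
  have mabc: "\<not> (R True a b = R True a c \<and> R True a c = R True b c)" using tri_mixed[of a b c] n nt(4) by auto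
  have mabd: "\<not> (R True a b = R True a d \<and> R True a d = R True b d)" using tri_mixed[of a b d] n nt(3) by auto
  have macd: "\<not> (R True a c = R True a d \<and> R True a d = R True c d)" using tri_mixed[of a c d] n nt(2) by auto
  have mbcd: "\<not> (R True b c = R True b d \<and> R True b d = R True c d)" using tri_mixed[of b c d] n nt(1) by auto
  have sym: "R True c b = R True b c" "R True d b = R True b d" "R True d c = R True c d"
    using Rsym_eq n by auto
  consider (1) "R True a c = R True a b" "R True a d = (\<not> R True a b)"
    | (2) "R True a d = R True a b" "R True a c = (\<not> R True a b)"
    | (3) "R True a d = R True a c" "R True a b = (\<not> R True a c)"
    using mabc mabd macd mbcd by blast
  then show False
  proof cases
    case 1
    have "\<not> indec {a,b,c,d}"
      by (rule core_at_a[of a b c d "R True a b"]) (use n dist sab sac sad sbc sbd scd 1 mabc mbcd in auto)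
    then show False using iQ Qe by simp
  next
    case 2
    have "\<not> indec {a,b,d,c}"
      by (rule core_at_a[of a b d c "R True a b"]) (use n dist sab sac sad sbc sbd scd 2 mabd mbcd sym in auto)
    moreover have "{a,b,d,c} = {a,b,c,d}" by auto
    ultimately show False using iQ Qe by simp
  next
    case 3
    have "\<not> indec {a,c,d,b}"
      by (rule core_at_a[of a c d b "R True a c"]) (use n dist sab sac sad sbc sbd scd 3 macd mbcd sym in auto)
    moreover have "{a,c,d,b} = {a,b,c,d}" by auto
    ultimately show False using iQ Qe by simp
  qed
qed

end

theorem proposition2p3:
  fixes n :: nat and A B :: "nat \<Rightarrow> nat \<Rightarrow> real"
  assumes "n \<ge> 4"
    and "gen_tournament n A" and "gen_tournament n B"
    and "indecomposable n A"
    and "\<forall>S. S \<subseteq> {0..<n} \<and> S \<noteq> {} \<longrightarrow> principal_minor A S = principal_minor B S"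
  shows "(\<forall>i<n. \<forall>j<n. A i j = B i j) \<or> (\<forall>i<n. \<forall>j<n. A i j = B j i)"
proof -
  interpret gts n A B
    by (unfold_locales) (use assms in auto)
  have iV: "indec {0..<n}" unfolding indec_def
  proof (intro allI impI)
    fix K assume K: "clanin {0..<n} K"
    have Ksub: "K \<subseteq> {0..<n}" using K unfolding clanin_def by blast
    have "\<forall>i\<in>K. \<forall>j\<in>K. \<forall>k\<in>{0..<n} - K. A i k = A j k \<and> A k i = A k j"
    proof (intro ballI)
      fix i j k assume i: "i \<in> K" and j: "j \<in> K" and k: "k \<in> {0..<n} - K"
      then have kij: "A k i = A k j" using K unfolding clanin_def by blast
      have "i < n" "j < n" "k < n" "k \<noteq> i" "k \<noteq> j" using i j k K unfolding clanin_def by auto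
      then have "A i k = 1 - A k i" "A j k = 1 - A k j" using skew by blast+
      then show "A i k = A j k \<and> A k i = A k j" using kij by simp
    qed
    then have "is_clan n A K" unfolding is_clan_def using Ksub by blast
    then show "card K \<le> 1 \<or> K = {0..<n}" using assms(4) unfolding indecomposable_def by blast
  qed
  obtain Z where Z: "Z \<subseteq> {0..<n}" "card Z = 3 \<or> card Z = 4" "indec Z"
    using L3[OF iV] assms(1) by auto
  have cZ: "cons Z"
  proof (cases "card Z = 3")
    case True
    then have "\<exists>a b c. Z = {a,b,c} \<and> a \<noteq> b \<and> b \<noteq> c \<and> a \<noteq> c"
      unfolding card_3_iff by metis
    then obtain a b c where abc: "Z = {a,b,c}" "a \<noteq> b" "b \<noteq> c" "a \<noteq> c"
      by blast
    have nb: "b < n" "c < n" using Z(1) abc by auto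
    obtain e where rbc: "R e b c" using R2[OF nb, of True] by blast
    have "modeon e {b,c}" unfolding modeon_def
      using rbc R_sym[OF nb rbc] R_diag nb by auto
    moreover have "Z - {a} = {b,c}" using abc by auto
    moreover have "a \<in> Z" using abc by blast
    ultimately show ?thesis using KLp[OF Z(1) Z(3), of a e] abc by simp
  next
    case False
    then have "card Z = 4" using Z(2) by simp
    then show ?thesis using L4[OF Z(1) _ Z(3)] by blast
  qed
  have "cons {0..<n}" using MI[OF iV Z(1) Z(3) _ cZ] Z(2) by auto
  then obtain e where m: "modeon e {0..<n}" unfolding cons_def by blast
  show ?thesis
  proof (cases e)
    case True
    then have "\<forall>i<n. \<forall>j<n. A i j = B i j" using m unfolding modeon_def R_def by auto
    then show ?thesis by blast
  next
    case False
    have "\<forall>i<n. \<forall>j<n. A i j = B j i"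
    proof (intro allI impI)
      fix i j assume "i < n" "j < n"
      then have "R e j i" using m unfolding modeon_def by auto
      then show "A i j = B j i" using False unfolding R_def by simp
    qed
    then show ?thesis by blast
  qed
qed

end
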